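(* Let $P$ and $Q$ be finite posets. If $J(P)$ and $J(Q)$ are both CDE then $J(P)\times J(Q)$ is CDE; if both are mCDE then $J(P)\times J(Q)$ is mCDE; if both are tCDE then $J(P)\times J(Q)=J(P+Q)$ is tCDE.
   Context: $J(P)$ is the poset of order ideals of $P$ ordered by inclusion; $P+Q$ is the disjoint union, and $J(P)\times J(Q)\cong J(P+Q)$ (direct product order). $\mathbb{E}(\mu;f)=\sum f\cdot\mathbb{P}(\mu;\cdot)$. $\mathrm{ddeg}(x)$ is the number of elements covered by $x$; $\mathrm{uni}$ is uniform; $\mathrm{maxchain}$ gives $x$ probability proportional to the number of maximal chains through $x$; $\mathrm{chain}(k)$ gives $x$ probability $\#\{k\text{-chains }c_0<\cdots<c_k\text{ containing }x\}/((k+1)\#\{k\text{-chains}\})$. CDE: $\mathbb{E}(\mathrm{maxchain};\mathrm{ddeg})=\mathbb{E}(\mathrm{uni};\mathrm{ddeg})$; mCDE: $\mathbb{E}(\mathrm{chain}(k);\mathrm{ddeg})=\mathbb{E}(\mathrm{uni};\mathrm{ddeg})$ for all $k$ from $0$ to the length of a longest chain. On $J(P)$: $\mathcal{T}^+_p(I)=1$ iff $p\notin I$ and $p$ minimal in $P\setminus I$; $\mathcal{T}^-_p(I)=1$ iff $p\in I$ and $p$ maximal in $I$. $\mu$ is toggle-symmetric if $\mathbb{E}(\mu;\mathcal{T}^+_p)=\mathbb{E}(\mu;\mathcal{T}^-_p)$ for all $p$; $J(P)$ is tCDE if $\mathbb{E}(\mu;\mathrm{ddeg})=\mathbb{E}(\mathrm{uni}_{J(P)};\mathrm{ddeg})$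 for every toggle-symmetric $\mu$ on $J(P)$. *)

theory Defs
  imports Complex_Main
begin

definition fposet :: "'a set \<Rightarrow> ('a \<Rightarrow> 'a \<Rightarrow> bool) \<Rightarrow> bool" where
  "fposet X le \<longleftrightarrow> finite X
     \<and> (\<forall>x\<in>X. le x x)
     \<and> (\<forall>x\<in>X. \<forall>y\<in>X. le x y \<and> le y x \<longrightarrow> x = y)
     \<and> (\<forall>x\<in>X. \<forall>y\<in>X. \<forall>z\<in>X. le x y \<and> le y z \<longrightarrow> le x z)"

definition slt :: "('a \<Rightarrow> 'a \<Rightarrow> bool) \<Rightarrow> 'a \<Rightarrow> 'a \<Rightarrow> bool" where
  "slt le x y \<longleftrightarrow> le x y \<and> x \<noteq> y"

text \<open>y covers x\<close>
definition covers :: "'a set \<Rightarrow> ('a \<Rightarrow> 'a \<Rightarrow> bool) \<Rightarrow> 'a \<Rightarrow> 'a \<Rightarrow> bool" where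
  "covers X le x y \<longleftrightarrow> x \<in> X \<and> y \<in> X \<and> slt le x y
     \<and> \<not> (\<exists>z\<in>X. slt le x z \<and> slt le z y)"

definition ddeg :: "'a set \<Rightarrow> ('a \<Rightarrow> 'a \<Rightarrow> bool) \<Rightarrow> 'a \<Rightarrow> nat" where
  "ddeg X le y = card {x \<in> X. covers X le x y}"

definition E_uni_ddeg :: "'a set \<Rightarrow> ('a \<Rightarrow> 'a \<Rightarrow> bool) \<Rightarrow> real" where
  "E_uni_ddeg X le = (\<Sum>x\<in>X. real (ddeg X le x)) / real (card X)"

text \<open>k-chains c_0 < c_1 < ... < c_k, as strictly increasing lists of length k+1\<close>
definition kchains :: "'a set \<Rightarrow> ('a \<Rightarrow> 'a \<Rightarrow> bool) \<Rightarrow> nat \<Rightarrow> 'a list set" where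
  "kchains X le k = {cs. length cs = Suc k \<and> set cs \<subseteq> X \<and> sorted_wrt (slt le) cs}"

definition E_chain_ddeg :: "'a set \<Rightarrow> ('a \<Rightarrow> 'a \<Rightarrow> bool) \<Rightarrow> nat \<Rightarrow> real" where
  "E_chain_ddeg X le k =
     (\<Sum>x\<in>X. real (ddeg X le x)
        * (real (card {cs \<in> kchains X le k. x \<in> set cs})
           / (real (Suc k) * real (card (kchains X le k)))))"

definition is_chain :: "'a set \<Rightarrow> ('a \<Rightarrow> 'a \<Rightarrow> bool) \<Rightarrow> 'a set \<Rightarrow> bool" where
  "is_chain X le C \<longleftrightarrow> C \<subseteq> X \<and> (\<forall>x\<in>C. \<forall>y\<in>C. le x y \<or> le y x)"

definition maxchains :: "'a set \<Rightarrow> ('a \<Rightarrow> 'a \<Rightarrow> bool) \<Rightarrow> 'a set set" where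
  "maxchains X le = {C. is_chain X le C \<and> (\<forall>D. is_chain X le D \<and> C \<subseteq> D \<longrightarrow> D = C)}"

definition chain_length :: "'a set \<Rightarrow> ('a \<Rightarrow> 'a \<Rightarrow> bool) \<Rightarrow> nat" where
  "chain_length X le = Max {card C - 1 | C. is_chain X le C}"

definition E_maxchain_ddeg :: "'a set \<Rightarrow> ('a \<Rightarrow> 'a \<Rightarrow> bool) \<Rightarrow> real" where
  "E_maxchain_ddeg X le =
     (\<Sum>x\<in>X. real (ddeg X le x)
        * (real (card {C \<in> maxchains X le. x \<in> C})
           / (\<Sum>y\<in>X. real (card {C \<in> maxchains X le. y \<in> C}))))"

definition CDE :: "'a set \<Rightarrow> ('a \<Rightarrow> 'a \<Rightarrow> bool) \<Rightarrow> bool" where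
  "CDE X le \<longleftrightarrow> E_maxchain_ddeg X le = E_uni_ddeg X le"

definition mCDE :: "'a set \<Rightarrow> ('a \<Rightarrow> 'a \<Rightarrow> bool) \<Rightarrow> bool" where
  "mCDE X le \<longleftrightarrow> (\<forall>k \<le> chain_length X le. E_chain_ddeg X le k = E_uni_ddeg X le)"

definition ideals :: "'a set \<Rightarrow> ('a \<Rightarrow> 'a \<Rightarrow> bool) \<Rightarrow> 'a set set" where
  "ideals P le = {I. I \<subseteq> P \<and> (\<forall>x\<in>I. \<forall>y\<in>P. le y x \<longrightarrow> y \<in> I)}"

text \<open>J(P) as a poset: carrier ideals P le, order inclusion\<close>
abbreviation J_le :: "'a set \<Rightarrow> 'a set \<Rightarrow> bool" where
  "J_le \<equiv> (\<subseteq>)"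

definition prod_le :: "('a \<Rightarrow> 'a \<Rightarrow> bool) \<Rightarrow> ('b \<Rightarrow> 'b \<Rightarrow> bool) \<Rightarrow> 'a \<times> 'b \<Rightarrow> 'a \<times> 'b \<Rightarrow> bool" where
  "prod_le le1 le2 p q \<longleftrightarrow> le1 (fst p) (fst q) \<and> le2 (snd p) (snd q)"

fun sum_le :: "('a \<Rightarrow> 'a \<Rightarrow> bool) \<Rightarrow> ('b \<Rightarrow> 'b \<Rightarrow> bool) \<Rightarrow> 'a + 'b \<Rightarrow> 'a + 'b \<Rightarrow> bool" where
  "sum_le le1 le2 (Inl a) (Inl b) = le1 a b"
| "sum_le le1 le2 (Inr a) (Inr b) = le2 a b"
| "sum_le le1 le2 _ _ = False"

definition Tplus :: "'a set \<Rightarrow> ('a \<Rightarrow> 'a \<Rightarrow> bool) \<Rightarrow> 'a \<Rightarrow> 'a set \<Rightarrow> real" where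
  "Tplus P le p I = (if p \<in> P \<and> p \<notin> I \<and> (\<forall>q\<in>P - I. le q p \<longrightarrow> q = p) then 1 else 0)"

definition Tminus :: "'a set \<Rightarrow> ('a \<Rightarrow> 'a \<Rightarrow> bool) \<Rightarrow> 'a \<Rightarrow> 'a set \<Rightarrow> real" where
  "Tminus P le p I = (if p \<in> I \<and> (\<forall>q\<in>I. le p q \<longrightarrow> q = p) then 1 else 0)"

definition is_distr :: "'b set \<Rightarrow> ('b \<Rightarrow> real) \<Rightarrow> bool" where
  "is_distr S \<mu> \<longleftrightarrow> (\<forall>x\<in>S. 0 \<le> \<mu> x) \<and> (\<Sum>x\<in>S. \<mu> x) = 1"

definition Expect :: "'b set \<Rightarrow> ('b \<Rightarrow> real) \<Rightarrow> ('b \<Rightarrow> real) \<Rightarrow> real" where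
  "Expect S \<mu> f = (\<Sum>x\<in>S. f x * \<mu> x)"

definition toggle_symmetric :: "'a set \<Rightarrow> ('a \<Rightarrow> 'a \<Rightarrow> bool) \<Rightarrow> ('a set \<Rightarrow> real) \<Rightarrow> bool" where
  "toggle_symmetric P le \<mu> \<longleftrightarrow>
     (\<forall>p\<in>P. Expect (ideals P le) \<mu> (Tplus P le p) = Expect (ideals P le) \<mu> (Tminus P le p))"

definition tCDE :: "'a set \<Rightarrow> ('a \<Rightarrow> 'a \<Rightarrow> bool) \<Rightarrow> bool" where
  "tCDE P le \<longleftrightarrow>
     (\<forall>\<mu>. is_distr (ideals P le) \<mu> \<and> toggle_symmetric P le \<mu> \<longrightarrow>
        Expect (ideals P le) \<mu> (\<lambda>I. real (ddeg (ideals P le) J_le I))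
          = E_uni_ddeg (ideals P le) J_le)"

end

theory Submission
  imports Defs
begin


lemma fposetD:
  assumes "fposet X le"
  shows "finite X" "x\<in>X \<Longrightarrow> le x x"
    "x\<in>X \<Longrightarrow> y\<in>X \<Longrightarrow> le x y \<Longrightarrow> le y x \<Longrightarrow> x = y"
    "x\<in>X \<Longrightarrow> y\<in>X \<Longrightarrow> z\<in>X \<Longrightarrow> le x y \<Longrightarrow> le y z \<Longrightarrow> le x z"
  using assms unfolding fposet_def by blast+

lemma exists_minimal:
  assumes "fposet X le" "S \<subseteq> X" "S \<noteq> {}"
  shows "\<exists>m\<in>S. \<forall>y\<in>S. le y m \<longrightarrow> y = m"
proof -
  have "finite S" using assms fposetD(1) finite_subset by blast
  then show ?thesis using assms(3,2)
  proof (induction S rule: finite_ne_induct)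
    case (singleton x) then show ?case by auto
  next
    case (insert x S)
    then obtain m where m: "m \<in> S" "\<forall>y\<in>S. le y m \<longrightarrow> y = m" by auto
    show ?case
    proof (cases "le x m")
      case True
      have "\<forall>y\<in>insert x S. le y x \<longrightarrow> y = x"
      proof (intro ballI impI)
        fix y assume y: "y \<in> insert x S" "le y x"
        show "y = x"
        proof (rule ccontr)
          assume "y \<noteq> x"
          then have "y \<in> S" using y by auto
          have "le y m" using fposetD(4)[OF assms(1), of y x m] y True \<open>y\<in>S\<close> insert m by auto
          then have "y = m" using m \<open>y \<in> S\<close> by auto
          then show False using fposetD(3)[OF assms(1), of x m] True y \<open>y\<noteq>x\<close> insert m by auto
        qed
      qed
      then show ?thesis by auto
    next
      case False
      then show ?thesis using m by auto
    qed
  qed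
qed

lemma sorted_slt_distinct: "sorted_wrt (slt le) xs \<Longrightarrow> distinct xs"
  by (induction xs) (auto simp: slt_def)

lemma finite_kchains: "finite X \<Longrightarrow> finite (kchains X le k)"
  unfolding kchains_def
  by (rule finite_subset[OF _ finite_lists_length_eq[of X "Suc k"]]) auto

lemma is_chain_subset: "is_chain X le C \<Longrightarrow> D \<subseteq> C \<Longrightarrow> is_chain X le D"
  unfolding is_chain_def by blast

lemma kchain_props:
  assumes "fposet X le" "L \<in> kchains X le k"
  shows "is_chain X le (set L)" "card (set L) = Suc k" "distinct L" "set L \<subseteq> X"
    "sorted_wrt (slt le) L" "length L = Suc k"
proof -
  have s: "sorted_wrt (slt le) L" and sx: "set L \<subseteq> X" and len: "length L = Suc k"
    using assms(2) unfolding kchains_def by auto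
  show d: "distinct L" using s sorted_slt_distinct by auto
  show "card (set L) = Suc k" using distinct_card[OF d] len by simp
  show "set L \<subseteq> X" "sorted_wrt (slt le) L" "length L = Suc k" using s sx len by auto
  show "is_chain X le (set L)" unfolding is_chain_def
  proof (intro conjI ballI)
    show "set L \<subseteq> X" using sx .
    fix x y assume "x \<in> set L" "y \<in> set L"
    then obtain i j where ij: "i < length L" "j < length L" "x = L!i" "y = L!j"
      by (auto simp: in_set_conv_nth)
    have xX: "x \<in> X" using ij sx nth_mem by blast
    show "le x y \<or> le y x"
    proof (cases i j rule: linorder_cases)
      case less then show ?thesis using s ij by (auto simp: sorted_wrt_iff_nth_less slt_def)
    next
      case equal then show ?thesis using ij fposetD(2)[OF assms(1) xX] by auto
    next
      case greater then show ?thesis using s ij by (auto simp: sorted_wrt_iff_nth_less slt_def)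
    qed
  qed
qed

lemma chain_to_list:
  assumes "fposet X le" "is_chain X le C" "card C = Suc k"
  shows "\<exists>L \<in> kchains X le k. set L = C"
  using assms(2,3)
proof (induction k arbitrary: C)
  case 0
  then obtain x where "C = {x}" by (auto simp: card_Suc_eq)
  then show ?case using 0 unfolding kchains_def is_chain_def
    by (intro bexI[of _ "[x]"]) auto
next
  case (Suc k)
  have CX: "C \<subseteq> X" using Suc.prems unfolding is_chain_def by auto
  have "C \<noteq> {}" using Suc.prems by auto
  then obtain m where m: "m \<in> C" "\<forall>y\<in>C. le y m \<longrightarrow> y = m"
    using exists_minimal[OF assms(1) CX] by blast
  have fin: "finite C" using CX fposetD(1)[OF assms(1)] finite_subset by blast
  have c1: "is_chain X le (C - {m})" using is_chain_subset Suc.prems by blast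
  have c2: "card (C - {m}) = Suc k" using Suc.prems m fin by simp
  obtain L' where L': "L' \<in> kchains X le k" "set L' = C - {m}" using Suc.IH[OF c1 c2] by blast
  have lt: "\<forall>y\<in>set L'. slt le m y"
  proof
    fix y assume "y \<in> set L'"
    then have y: "y \<in> C" "y \<noteq> m" using L' by auto
    then have "le m y \<or> le y m" using Suc.prems m unfolding is_chain_def by auto
    then show "slt le m y" using m y unfolding slt_def by auto
  qed
  show ?case
    apply (rule bexI[of _ "m # L'"])
    using L' lt m CX unfolding kchains_def by auto
qed

lemma sorted_slt_unique:
  assumes "fposet X le"
  shows "sorted_wrt (slt le) L1 \<Longrightarrow> sorted_wrt (slt le) L2 \<Longrightarrow> set L1 \<subseteq> X
     \<Longrightarrow> set L1 = set L2 \<Longrightarrow> L1 = L2"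
proof (induction L1 arbitrary: L2)
  case Nil then show ?case by auto
next
  case (Cons a L1)
  then obtain b L2' where L2: "L2 = b # L2'" by (cases L2) auto
  have ab: "a = b"
  proof (rule ccontr)
    assume ne: "a \<noteq> b"
    have "a \<in> set L2" using Cons.prems(4) by (metis list.set_intros(1))
    then have "a \<in> set L2'" using L2 ne by simp
    then have "slt le b a" using Cons.prems(2) L2 by auto
    have "b \<in> set (a # L1)" using Cons.prems(4) L2 by simp
    then have "b \<in> set L1" using ne by simp
    then have "slt le a b" using Cons.prems(1) by auto
    have "a \<in> X" "b \<in> X" using Cons.prems \<open>b \<in> set L1\<close> by auto
    then show False using \<open>slt le a b\<close> \<open>slt le b a\<close> fposetD(3)[OF assms] ne unfolding slt_def by blast
  qed
  have "a \<notin> set L1" using Cons.prems(1) by (auto simp: slt_def)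
  moreover have "b \<notin> set L2'" using Cons.prems(2) L2 by (auto simp: slt_def)
  ultimately have "set L1 = set L2'" using Cons.prems(4) L2 ab by auto
  then have "L1 = L2'" using Cons.IH Cons.prems L2 by auto
  then show ?case using L2 ab by simp
qed

lemma kchains_inj: "fposet X le \<Longrightarrow> inj_on set (kchains X le k)"
proof (rule inj_onI)
  fix L1 L2 assume a: "fposet X le" "L1 \<in> kchains X le k" "L2 \<in> kchains X le k" "set L1 = set L2"
  show "L1 = L2"
    by (rule sorted_slt_unique[OF a(1) kchain_props(5)[OF a(1,2)] kchain_props(5)[OF a(1,3)]
          kchain_props(4)[OF a(1,2)] a(4)])
qed

lemma chain_length_finite: "fposet X le \<Longrightarrow> finite {card C - 1 | C. is_chain X le C}"
proof -
  assume a: "fposet X le"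
  have "{card C - 1 | C. is_chain X le C} \<subseteq> (\<lambda>C. card C - 1) ` Pow X"
  proof
    fix n assume "n \<in> {card C - 1 | C. is_chain X le C}"
    then obtain C where C: "n = card C - 1" "is_chain X le C" by blast
    then have "C \<in> Pow X" unfolding is_chain_def by blast
    then show "n \<in> (\<lambda>C. card C - 1) ` Pow X" using C(1) by blast
  qed
  then show ?thesis using fposetD(1)[OF a] finite_subset by blast
qed

lemma chain_length_ge: "fposet X le \<Longrightarrow> is_chain X le C \<Longrightarrow> card C - 1 \<le> chain_length X le"
  unfolding chain_length_def using chain_length_finite by (intro Max_ge) auto

lemma kchains_empty_above:
  assumes "fposet X le" "chain_length X le < k"
  shows "kchains X le k = {}"
proof (rule ccontr)
  assume "kchains X le k \<noteq> {}"
  then obtain L where L: "L \<in> kchains X le k" by auto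
  have "card (set L) - 1 \<le> chain_length X le"
    using chain_length_ge[OF assms(1) kchain_props(1)[OF assms(1) L]] .
  then show False using kchain_props(2)[OF assms(1) L] assms(2) by simp
qed

lemma kchains_nonempty:
  assumes "fposet X le" "X \<noteq> {}" "k \<le> chain_length X le"
  shows "kchains X le k \<noteq> {}"
proof -
  have e: "is_chain X le {}" unfolding is_chain_def by simp
  have ne: "{card C - 1 | C. is_chain X le C} \<noteq> {}" using e by blast
  have "chain_length X le \<in> {card C - 1 | C. is_chain X le C}"
    unfolding chain_length_def by (rule Max_in[OF chain_length_finite[OF assms(1)] ne])
  then obtain C where C': "chain_length X le = card C - 1" "is_chain X le C" by blast
  then have C: "is_chain X le C" "card C - 1 = chain_length X le" by auto
  have "\<exists>D. is_chain X le D \<and> card D = Suc k"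
  proof (cases "card C = 0")
    case True
    then have k0: "k = 0" using C assms(3) by simp
    obtain x where x: "x \<in> X" using assms(2) by blast
    have "is_chain X le {x}" unfolding is_chain_def using fposetD(2)[OF assms(1) x] x by simp
    moreover have "card {x} = Suc k" using k0 by simp
    ultimately show ?thesis by blast
  next
    case False
    then have "Suc k \<le> card C" using C assms(3) by simp
    then obtain D where D: "D \<subseteq> C" "card D = Suc k" using obtain_subset_with_card_n by metis
    have "is_chain X le D" using is_chain_subset[OF C(1) D(1)] .
    then show ?thesis using D(2) by blast
  qed
  then obtain D where D: "is_chain X le D" "card D = Suc k" by blast
  obtain L where "L \<in> kchains X le k" using chain_to_list[OF assms(1) D] by blast
  then show ?thesis by blast
qed



definition graded :: "'a set \<Rightarrow> ('a \<Rightarrow> 'a \<Rightarrow> bool) \<Rightarrow> ('a \<Rightarrow> nat) \<Rightarrow> nat \<Rightarrow> bool" where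
 "graded X le r m \<longleftrightarrow> (\<forall>x\<in>X. r x \<le> m) \<and> (\<forall>x\<in>X. \<forall>y\<in>X. slt le x y \<longrightarrow> r x < r y)
   \<and> (\<forall>x\<in>X. \<forall>y\<in>X. slt le x y \<longrightarrow> (\<exists>z\<in>X. le x z \<and> le z y \<and> r z = Suc (r x)))
   \<and> (\<exists>b\<in>X. r b = 0 \<and> (\<forall>x\<in>X. le b x)) \<and> (\<exists>t\<in>X. r t = m \<and> (\<forall>x\<in>X. le x t))"

lemma graded_chain_card:
  assumes "fposet X le" "graded X le r m" "is_chain X le C"
  shows "card C \<le> Suc m"
proof -
  have gr: "\<forall>x\<in>X. \<forall>y\<in>X. slt le x y \<longrightarrow> r x < r y" using assms(2) unfolding graded_def by blast
  have inj: "inj_on r C"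
  proof (rule inj_onI)
    fix x y assume xy: "x \<in> C" "y \<in> C" "r x = r y"
    show "x = y"
    proof (rule ccontr)
      assume ne: "x \<noteq> y"
      have X: "x \<in> X" "y \<in> X" using assms(3) xy unfolding is_chain_def by auto
      have "le x y \<or> le y x" using assms(3) xy unfolding is_chain_def by auto
      then show False
      proof
        assume "le x y" then have "r x < r y" using gr X ne by (auto simp: slt_def)
        then show False using xy(3) by simp
      next
        assume "le y x" then have "r y < r x" using gr X ne by (auto simp: slt_def)
        then show False using xy(3) by simp
      qed
    qed
  qed
  have "r ` C \<subseteq> {..m}" using assms(2,3) unfolding graded_def is_chain_def by auto
  then have "card (r ` C) \<le> Suc m" using card_mono[of "{..m}" "r ` C"] by simp
  then show ?thesis using card_image[OF inj] by simp
qed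

lemma maxchain_insert:
  assumes "fposet X le" "C \<in> maxchains X le" "z \<in> X" "\<forall>c\<in>C. le z c \<or> le c z"
  shows "z \<in> C"
proof -
  have ch: "is_chain X le C" using assms(2) unfolding maxchains_def by blast
  have "is_chain X le (insert z C)"
    unfolding is_chain_def
  proof (intro conjI ballI)
    show "insert z C \<subseteq> X" using ch assms(3) unfolding is_chain_def by blast
    fix x y assume "x \<in> insert z C" "y \<in> insert z C"
    then show "le x y \<or> le y x"
      using ch assms(4) fposetD(2)[OF assms(1) assms(3)] unfolding is_chain_def by blast
  qed
  then have "insert z C = C" using assms(2) unfolding maxchains_def by blast
  then show ?thesis by blast
qed

lemma graded_maxchain_card:
  assumes fp: "fposet X le" and g: "graded X le r m" and C: "C \<in> maxchains X le"
  shows "card C = Suc m"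
proof -
  have ch: "is_chain X le C" using C unfolding maxchains_def by blast
  have CX: "C \<subseteq> X" using ch unfolding is_chain_def by blast
  have finC: "finite C" using CX fposetD(1)[OF fp] finite_subset by blast
  have gr: "\<forall>x\<in>X. \<forall>y\<in>X. slt le x y \<longrightarrow> r x < r y"
    and st: "\<forall>x\<in>X. \<forall>y\<in>X. slt le x y \<longrightarrow> (\<exists>z\<in>X. le x z \<and> le z y \<and> r z = Suc (r x))"
    using g unfolding graded_def by blast+
  obtain b where b: "b\<in>X" "r b = 0" "\<forall>x\<in>X. le b x" using g unfolding graded_def by blast
  obtain t where t: "t\<in>X" "r t = m" "\<forall>x\<in>X. le x t" using g unfolding graded_def by blast
  have bC: "b \<in> C" using maxchain_insert[OF fp C b(1)] b(3) CX by blast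
  have tC: "t \<in> C" using maxchain_insert[OF fp C t(1)] t(3) CX by blast
  have all: "\<forall>s\<le>m. \<exists>c\<in>C. r c = s"
  proof (intro allI impI)
    fix s assume "s \<le> m" then show "\<exists>c\<in>C. r c = s"
    proof (induction s)
      case 0 then show ?case using bC b(2) by blast
    next
      case (Suc s)
      from Suc.IH Suc.prems obtain c where c: "c \<in> C" "r c = s" by auto
      define U where "U = {d\<in>C. slt le c d}"
      have cX: "c \<in> X" using c CX by blast
      have "t \<in> U" unfolding U_def slt_def using tC t c cX Suc.prems by auto
      have finU: "finite U" using finC unfolding U_def by simp
      have "Min (r ` U) \<in> r ` U" using finU \<open>t\<in>U\<close> by (intro Min_in) auto
      then obtain d where d1: "d \<in> U" "r d = Min (r ` U)" by auto
      have d2: "\<forall>e\<in>U. r d \<le> r e" using d1(2) finU by simp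
      have dC: "d \<in> C" and slt_cd: "slt le c d" using d1(1) unfolding U_def by auto
      have dX: "d \<in> X" using dC CX by blast
      have "s < r d" using gr cX dX slt_cd c(2) by auto
      show ?case
      proof (cases "r d = Suc s")
        case True then show ?thesis using dC by blast
      next
        case False
        with \<open>s < r d\<close> have big: "Suc s < r d" by simp
        obtain z where z: "z \<in> X" "le c z" "le z d" "r z = Suc (r c)" using st cX dX slt_cd by blast
        have comp: "\<forall>e\<in>C. le z e \<or> le e z"
        proof
          fix e assume eC: "e \<in> C"
          have eX: "e \<in> X" using eC CX by blast
          have "le e c \<or> le c e" using ch eC c(1) unfolding is_chain_def by blast
          then show "le z e \<or> le e z"
          proof
            assume "le e c" then show ?thesis using fposetD(4)[OF fp eX cX z(1)] z(2) by blast
          next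
            assume ce: "le c e"
            show ?thesis
            proof (cases "e = c")
              case True then show ?thesis using z(2) by blast
            next
              case False
              then have eU: "e \<in> U" unfolding U_def slt_def using eC ce by auto
              then have rde: "r d \<le> r e" using d2 by blast
              have "le e d \<or> le d e" using ch eC dC unfolding is_chain_def by blast
              then show ?thesis
              proof
                assume ed: "le e d"
                have "e = d"
                proof (rule ccontr)
                  assume "e \<noteq> d" then have "r e < r d" using gr eX dX ed by (auto simp: slt_def)
                  then show False using rde by simp
                qed
                then show ?thesis using z(3) by blast
              next
                assume "le d e" then show ?thesis using fposetD(4)[OF fp z(1) dX eX] z(3) by blast
              qed
            qed
          qed
        qed
        have zC: "z \<in> C" using maxchain_insert[OF fp C z(1) comp] .
        have "z \<noteq> c" using z(4) by auto
        then have "z \<in> U" unfolding U_def slt_def using zC z(2) by auto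
        then have "r d \<le> r z" using d2 by blast
        then show ?thesis using big z(4) c(2) by simp
      qed
    qed
  qed
  have "{..m} \<subseteq> r ` C" using all by auto
  then have "Suc m \<le> card (r ` C)" using card_mono[OF finite_imageI[OF finC]] by fastforce
  also have "... \<le> card C" using card_image_le[OF finC] .
  finally show ?thesis using graded_chain_card[OF fp g ch] by simp
qed

lemma exists_maxchain:
  assumes fp: "fposet X le"
  shows "\<exists>C. C \<in> maxchains X le"
proof -
  define Ch where "Ch = {C. is_chain X le C}"
  have "Ch \<subseteq> Pow X" unfolding Ch_def is_chain_def by blast
  then have finCh: "finite Ch" using fposetD(1)[OF fp] finite_subset by blast
  have "{} \<in> Ch" unfolding Ch_def is_chain_def by blast
  then have "Max (card ` Ch) \<in> card ` Ch" using finCh by (intro Max_in) auto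
  then obtain C where C: "C \<in> Ch" "card C = Max (card ` Ch)" by auto
  have "C \<in> maxchains X le" unfolding maxchains_def
  proof (intro CollectI conjI allI impI)
    show "is_chain X le C" using C unfolding Ch_def by blast
    fix D assume D: "is_chain X le D \<and> C \<subseteq> D"
    then have "D \<in> Ch" unfolding Ch_def by blast
    then have "card D \<le> card C" using C(2) finCh by simp
    moreover have "finite D" using D fposetD(1)[OF fp] finite_subset unfolding is_chain_def by blast
    ultimately show "D = C" using D card_seteq by blast
  qed
  then show ?thesis by blast
qed

lemma graded_maxchains:
  assumes fp: "fposet X le" and g: "graded X le r m"
  shows "maxchains X le = set ` kchains X le m" "chain_length X le = m" "kchains X le m \<noteq> {}"
proof -
  show eq: "maxchains X le = set ` kchains X le m"
  proof
    show "maxchains X le \<subseteq> set ` kchains X le m"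
    proof
      fix C assume C: "C \<in> maxchains X le"
      have "is_chain X le C" using C unfolding maxchains_def by blast
      then obtain L where "L \<in> kchains X le m" "set L = C"
        using chain_to_list[OF fp _ graded_maxchain_card[OF fp g C]] by blast
      then show "C \<in> set ` kchains X le m" by blast
    qed
  next
    show "set ` kchains X le m \<subseteq> maxchains X le"
    proof
      fix C assume "C \<in> set ` kchains X le m"
      then obtain L where L: "L \<in> kchains X le m" "C = set L" by blast
      have ch: "is_chain X le C" and cc: "card C = Suc m"
        using kchain_props[OF fp L(1)] L(2) by auto
      show "C \<in> maxchains X le" unfolding maxchains_def
      proof (intro CollectI conjI allI impI)
        show "is_chain X le C" using ch .
        fix D assume D: "is_chain X le D \<and> C \<subseteq> D"
        have "card D \<le> Suc m" using graded_chain_card[OF fp g] D by blast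
        moreover have "finite D" using D fposetD(1)[OF fp] finite_subset unfolding is_chain_def by blast
        ultimately show "D = C" using D cc card_seteq by (metis)
      qed
    qed
  qed
  obtain C where C: "C \<in> maxchains X le" using exists_maxchain[OF fp] by blast
  then show "kchains X le m \<noteq> {}" using eq by blast
  have chC: "is_chain X le C" using C unfolding maxchains_def by blast
  have "m \<le> chain_length X le"
    using chain_length_ge[OF fp chC] graded_maxchain_card[OF fp g C] by simp
  moreover have "chain_length X le \<le> m"
  proof -
    have ne: "{card C - 1 | C. is_chain X le C} \<noteq> {}" using chC by blast
    have "\<forall>n\<in>{card C - 1 | C. is_chain X le C}. n \<le> m"
      using graded_chain_card[OF fp g] by fastforce
    then show ?thesis unfolding chain_length_def
      using Max_le_iff[OF chain_length_finite[OF fp] ne] by blast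
  qed
  ultimately show "chain_length X le = m" by simp
qed

lemma fposet_ideals: "finite P \<Longrightarrow> fposet (ideals P le) J_le"
proof -
  assume "finite P"
  moreover have "ideals P le \<subseteq> Pow P" unfolding ideals_def by blast
  ultimately have "finite (ideals P le)" using finite_subset by blast
  then show ?thesis unfolding fposet_def by blast
qed

lemma ideals_bot_top: "{} \<in> ideals P le" "P \<in> ideals P le"
  unfolding ideals_def by auto

lemma graded_ideals:
  assumes fp: "fposet P le"
  shows "graded (ideals P le) J_le card (card P)"
  unfolding graded_def
proof (intro conjI)
  have finP: "finite P" using fposetD(1)[OF fp] .
  show "\<forall>x\<in>ideals P le. card x \<le> card P"
    using finP card_mono unfolding ideals_def by blast
  show "\<forall>x\<in>ideals P le. \<forall>y\<in>ideals P le. slt J_le x y \<longrightarrow> card x < card y"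
  proof (intro ballI impI)
    fix x y assume "x \<in> ideals P le" "y \<in> ideals P le" "slt J_le x y"
    then have "x \<subset> y" "finite y" using finP finite_subset unfolding ideals_def slt_def by auto
    then show "card x < card y" using psubset_card_mono by blast
  qed
  show "\<forall>x\<in>ideals P le. \<forall>y\<in>ideals P le. slt J_le x y \<longrightarrow>
          (\<exists>z\<in>ideals P le. J_le x z \<and> J_le z y \<and> card z = Suc (card x))"
  proof (intro ballI impI)
    fix I K assume I: "I \<in> ideals P le" and K: "K \<in> ideals P le" and sl: "slt J_le I K"
    have KP: "K \<subseteq> P" using K unfolding ideals_def by blast
    have ne: "K - I \<noteq> {}" using sl unfolding slt_def by blast
    obtain p where p: "p \<in> K - I" "\<forall>y\<in>K - I. le y p \<longrightarrow> y = p"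
      using exists_minimal[OF fp _ ne] KP by blast
    have zI: "insert p I \<in> ideals P le" unfolding ideals_def
    proof (intro CollectI conjI ballI impI)
      show "insert p I \<subseteq> P" using I KP p unfolding ideals_def by blast
      fix x y assume x: "x \<in> insert p I" and y: "y \<in> P" and yx: "le y x"
      show "y \<in> insert p I"
      proof (cases "x \<in> I")
        case True then show ?thesis using I y yx unfolding ideals_def by blast
      next
        case False
        then have "x = p" using x by blast
        then have "y \<in> K" using K p y yx unfolding ideals_def by blast
        then show ?thesis using p yx \<open>x = p\<close> by blast
      qed
    qed
    have "finite I" using I finP finite_subset unfolding ideals_def by blast
    then have "card (insert p I) = Suc (card I)" using p by simp
    moreover have "J_le (insert p I) K" using sl p unfolding slt_def by blast
    ultimately show "\<exists>z\<in>ideals P le. J_le I z \<and> J_le z K \<and> card z = Suc (card I)"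
      using zI by blast
  qed
  show "\<exists>b\<in>ideals P le. card b = 0 \<and> (\<forall>x\<in>ideals P le. J_le b x)"
    using ideals_bot_top(1) by force
  show "\<exists>t\<in>ideals P le. card t = card P \<and> (\<forall>x\<in>ideals P le. J_le x t)"
    using ideals_bot_top(2) unfolding ideals_def by blast
qed

lemma fposet_prod:
  assumes X: "fposet X leX" and Y: "fposet Y leY"
  shows "fposet (X \<times> Y) (prod_le leX leY)"
  unfolding fposet_def
proof (intro conjI ballI impI)
  show "finite (X \<times> Y)" using fposetD(1)[OF X] fposetD(1)[OF Y] by simp
  fix x assume "x \<in> X \<times> Y"
  then show "prod_le leX leY x x" unfolding prod_le_def using fposetD(2)[OF X] fposetD(2)[OF Y] by auto
next
  fix x y assume xy: "x \<in> X \<times> Y" "y \<in> X \<times> Y" "prod_le leX leY x y \<and> prod_le leX leY y x"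
  then have "fst x = fst y" "snd x = snd y"
    using fposetD(3)[OF X] fposetD(3)[OF Y] unfolding prod_le_def by auto
  then show "x = y" by (simp add: prod_eq_iff)
next
  fix x y z assume xyz: "x \<in> X \<times> Y" "y \<in> X \<times> Y" "z \<in> X \<times> Y"
    "prod_le leX leY x y \<and> prod_le leX leY y z"
  then show "prod_le leX leY x z"
  proof -
    have m: "fst x \<in> X" "fst y \<in> X" "fst z \<in> X" "snd x \<in> Y" "snd y \<in> Y" "snd z \<in> Y"
      using xyz by auto
    show ?thesis using xyz(4) fposetD(4)[OF X m(1-3)] fposetD(4)[OF Y m(4-6)]
      unfolding prod_le_def by auto
  qed
qed

lemma graded_prod:
  assumes X: "fposet X leX" and Y: "fposet Y leY" and gX: "graded X leX rX m" and gY: "graded Y leY rY n"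
  shows "graded (X \<times> Y) (prod_le leX leY) (\<lambda>z. rX (fst z) + rY (snd z)) (m + n)"
proof -
  have rX: "\<forall>x\<in>X. rX x \<le> m" and grX: "\<forall>x\<in>X. \<forall>y\<in>X. slt leX x y \<longrightarrow> rX x < rX y"
    and stX: "\<forall>x\<in>X. \<forall>y\<in>X. slt leX x y \<longrightarrow> (\<exists>z\<in>X. leX x z \<and> leX z y \<and> rX z = Suc (rX x))"
    using gX unfolding graded_def by blast+
  obtain bX where bX: "bX\<in>X" "rX bX = 0" "\<forall>x\<in>X. leX bX x" using gX unfolding graded_def by blast
  obtain tX where tX: "tX\<in>X" "rX tX = m" "\<forall>x\<in>X. leX x tX" using gX unfolding graded_def by blast
  have rY: "\<forall>x\<in>Y. rY x \<le> n" and grY: "\<forall>x\<in>Y. \<forall>y\<in>Y. slt leY x y \<longrightarrow> rY x < rY y"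
    and stY: "\<forall>x\<in>Y. \<forall>y\<in>Y. slt leY x y \<longrightarrow> (\<exists>z\<in>Y. leY x z \<and> leY z y \<and> rY z = Suc (rY x))"
    using gY unfolding graded_def by blast+
  obtain bY where bY: "bY\<in>Y" "rY bY = 0" "\<forall>x\<in>Y. leY bY x" using gY unfolding graded_def by blast
  obtain tY where tY: "tY\<in>Y" "rY tY = n" "\<forall>x\<in>Y. leY x tY" using gY unfolding graded_def by blast
  have leqX: "\<And>a c. a \<in> X \<Longrightarrow> c \<in> X \<Longrightarrow> leX a c \<Longrightarrow> rX a \<le> rX c"
    using grX unfolding slt_def by (metis less_or_eq_imp_le)
  have leqY: "\<And>a c. a \<in> Y \<Longrightarrow> c \<in> Y \<Longrightarrow> leY a c \<Longrightarrow> rY a \<le> rY c"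
    using grY unfolding slt_def by (metis less_or_eq_imp_le)
  show ?thesis unfolding graded_def
  proof (intro conjI)
    show "\<forall>x\<in>X \<times> Y. rX (fst x) + rY (snd x) \<le> m + n" using rX rY by (auto intro: add_mono)
    show "\<forall>x\<in>X \<times> Y. \<forall>y\<in>X \<times> Y. slt (prod_le leX leY) x y \<longrightarrow>
            rX (fst x) + rY (snd x) < rX (fst y) + rY (snd y)"
    proof (intro ballI impI)
      fix p q assume p: "p \<in> X \<times> Y" and q: "q \<in> X \<times> Y" and s: "slt (prod_le leX leY) p q"
      obtain a b where pab: "p = (a,b)" by (cases p)
      obtain c d where qcd: "q = (c,d)" by (cases q)
      have in4: "a \<in> X" "b \<in> Y" "c \<in> X" "d \<in> Y" using p q pab qcd by auto
      have le2: "leX a c" "leY b d" and ne: "a \<noteq> c \<or> b \<noteq> d"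
        using s pab qcd unfolding slt_def prod_le_def by auto
      have "rX a \<le> rX c" "rY b \<le> rY d" using leqX leqY in4 le2 by auto
      moreover have "rX a < rX c \<or> rY b < rY d"
        using ne grX grY in4 le2 unfolding slt_def by blast
      ultimately show "rX (fst p) + rY (snd p) < rX (fst q) + rY (snd q)" using pab qcd by auto
    qed
    show "\<forall>x\<in>X \<times> Y. \<forall>y\<in>X \<times> Y. slt (prod_le leX leY) x y \<longrightarrow>
       (\<exists>z\<in>X \<times> Y. prod_le leX leY x z \<and> prod_le leX leY z y \<and>
            rX (fst z) + rY (snd z) = Suc (rX (fst x) + rY (snd x)))"
    proof (intro ballI impI)
      fix p q assume p: "p \<in> X \<times> Y" and q: "q \<in> X \<times> Y" and s: "slt (prod_le leX leY) p q"
      obtain a b where pab: "p = (a,b)" by (cases p)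
      obtain c d where qcd: "q = (c,d)" by (cases q)
      have in4: "a \<in> X" "b \<in> Y" "c \<in> X" "d \<in> Y" using p q pab qcd by auto
      have le2: "leX a c" "leY b d" and ne: "a \<noteq> c \<or> b \<noteq> d"
        using s pab qcd unfolding slt_def prod_le_def by auto
      show "\<exists>z\<in>X \<times> Y. prod_le leX leY p z \<and> prod_le leX leY z q \<and>
            rX (fst z) + rY (snd z) = Suc (rX (fst p) + rY (snd p))"
      proof (cases "a \<noteq> c")
        case True
        then obtain z where z: "z \<in> X" "leX a z" "leX z c" "rX z = Suc (rX a)"
          using stX in4 le2 unfolding slt_def by blast
        show ?thesis
          apply (rule bexI[of _ "(z,b)"])
          using z in4 le2 pab qcd fposetD(2)[OF Y] unfolding prod_le_def by auto
      next
        case False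
        then have "b \<noteq> d" using ne by blast
        then obtain z where z: "z \<in> Y" "leY b z" "leY z d" "rY z = Suc (rY b)"
          using stY in4 le2 unfolding slt_def by blast
        show ?thesis
          apply (rule bexI[of _ "(a,z)"])
          using z in4 le2 pab qcd fposetD(2)[OF X] False unfolding prod_le_def by auto
      qed
    qed
    show "\<exists>b\<in>X \<times> Y. rX (fst b) + rY (snd b) = 0 \<and> (\<forall>x\<in>X \<times> Y. prod_le leX leY b x)"
      apply (rule bexI[of _ "(bX,bY)"]) using bX bY unfolding prod_le_def by auto
    show "\<exists>t\<in>X \<times> Y. rX (fst t) + rY (snd t) = m + n \<and> (\<forall>x\<in>X \<times> Y. prod_le leX leY x t)"
      apply (rule bexI[of _ "(tX,tY)"]) using tX tY unfolding prod_le_def by auto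
  qed
qed



fun cnt :: "('a \<Rightarrow> 'a \<Rightarrow> bool) \<Rightarrow> 'a set \<Rightarrow> nat \<Rightarrow> 'a \<Rightarrow> real" where
  "cnt R X 0 x = 1"
| "cnt R X (Suc k) x = (\<Sum>y\<in>{y\<in>X. R y x}. cnt R X k y)"

fun wt :: "('a \<Rightarrow> 'a \<Rightarrow> bool) \<Rightarrow> 'a set \<Rightarrow> ('a \<Rightarrow> real) \<Rightarrow> nat \<Rightarrow> 'a \<Rightarrow> real" where
  "wt R X g 0 x = g x"
| "wt R X g (Suc k) x = (\<Sum>y\<in>{y\<in>X. R y x}. wt R X g k y) + g x * cnt R X (Suc k) x"

declare cnt.simps(2)[simp del] wt.simps(2)[simp del]

lemma pascal1:
  "(\<Sum>j\<le>k. real (k choose j) * (a (Suc j) + a j)) = (\<Sum>j\<le>Suc k. real (Suc k choose j) * a j)"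
proof -
  have h1: "(\<Sum>j\<le>Suc k. real (Suc k choose j) * a j) = a 0 + (\<Sum>j\<le>k. real (Suc k choose Suc j) * a (Suc j))"
    by (subst sum.atMost_Suc_shift) simp
  have h2: "(\<Sum>j\<le>k. real (Suc k choose Suc j) * a (Suc j))
      = (\<Sum>j\<le>k. real (k choose j) * a (Suc j)) + (\<Sum>j\<le>k. real (k choose Suc j) * a (Suc j))"
    by (simp add: sum.distrib algebra_simps)
  have h3: "a 0 + (\<Sum>j\<le>k. real (k choose Suc j) * a (Suc j)) = (\<Sum>j\<le>Suc k. real (k choose j) * a j)"
    by (subst sum.atMost_Suc_shift) simp
  have h4: "(\<Sum>j\<le>Suc k. real (k choose j) * a j) = (\<Sum>j\<le>k. real (k choose j) * a j)"
    by simp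
  have h5: "(\<Sum>j\<le>k. real (k choose j) * (a (Suc j) + a j))
     = (\<Sum>j\<le>k. real (k choose j) * a (Suc j)) + (\<Sum>j\<le>k. real (k choose j) * a j)"
    by (simp add: sum.distrib algebra_simps)
  show ?thesis using h1 h2 h3 h4 h5 by linarith
qed

lemma pascal2:
  assumes "b 0 = c 0"
  shows "(\<Sum>j\<le>k. real (Suc k choose Suc j) * (b (Suc j) - c (Suc j) + b j))
         + (\<Sum>j\<le>Suc k. real (Suc k choose j) * c j)
       = (\<Sum>j\<le>Suc k. real (Suc (Suc k) choose Suc j) * b j)"
proof -
  have h1: "(\<Sum>j\<le>Suc k. real (Suc k choose j) * c j) = c 0 + (\<Sum>j\<le>k. real (Suc k choose Suc j) * c (Suc j))"
    by (subst sum.atMost_Suc_shift) simp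
  have h2: "(\<Sum>j\<le>Suc k. real (Suc (Suc k) choose Suc j) * b j)
     = (\<Sum>j\<le>Suc k. real (Suc k choose Suc j) * b j) + (\<Sum>j\<le>Suc k. real (Suc k choose j) * b j)"
    by (simp only: binomial_Suc_Suc of_nat_add distrib_right sum.distrib)
  have h3: "(\<Sum>j\<le>Suc k. real (Suc k choose Suc j) * b j) = (\<Sum>j\<le>k. real (Suc k choose Suc j) * b j)"
    by (simp del: binomial_Suc_Suc add: binomial_eq_0)
  have h4: "(\<Sum>j\<le>Suc k. real (Suc k choose j) * b j) = b 0 + (\<Sum>j\<le>k. real (Suc k choose Suc j) * b (Suc j))"
    by (subst sum.atMost_Suc_shift) simp
  have h5: "(\<Sum>j\<le>k. real (Suc k choose Suc j) * (b (Suc j) - c (Suc j) + b j))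
     = (\<Sum>j\<le>k. real (Suc k choose Suc j) * b (Suc j)) - (\<Sum>j\<le>k. real (Suc k choose Suc j) * c (Suc j))
       + (\<Sum>j\<le>k. real (Suc k choose Suc j) * b j)"
    by (simp add: sum.distrib sum_subtractf algebra_simps)
  show ?thesis using h1 h2 h3 h4 h5 assms by linarith
qed

lemma split_le:
  assumes "fposet X le" "x \<in> X"
  shows "{y\<in>X. le y x} = insert x {y\<in>X. slt le y x}" "x \<notin> {y\<in>X. slt le y x}"
    "finite {y\<in>X. slt le y x}"
  using fposetD(2)[OF assms] fposetD(1)[OF assms(1)] assms(2) by (auto simp: slt_def)

lemma cnt_le:
  assumes fp: "fposet X le" and "x \<in> X"
  shows "cnt le X k x = (\<Sum>j\<le>k. real (k choose j) * cnt (slt le) X j x)"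
  using assms(2)
proof (induction k arbitrary: x)
  case 0 then show ?case by simp
next
  case (Suc k)
  note sp = split_le[OF fp Suc.prems]
  have s1: "cnt le X (Suc k) x = cnt le X k x + (\<Sum>y\<in>{y\<in>X. slt le y x}. cnt le X k y)"
    by (simp add: cnt.simps(2) sp(1) sum.insert[OF sp(3) sp(2)])
  have "(\<Sum>y\<in>{y\<in>X. slt le y x}. cnt le X k y)
      = (\<Sum>y\<in>{y\<in>X. slt le y x}. \<Sum>j\<le>k. real (k choose j) * cnt (slt le) X j y)"
    using Suc.IH by (intro sum.cong) auto
  also have "... = (\<Sum>j\<le>k. real (k choose j) * (\<Sum>y\<in>{y\<in>X. slt le y x}. cnt (slt le) X j y))"
    by (subst sum.swap) (simp add: sum_distrib_left)
  also have "... = (\<Sum>j\<le>k. real (k choose j) * cnt (slt le) X (Suc j) x)"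
    by (simp add: cnt.simps(2))
  finally have s2: "(\<Sum>y\<in>{y\<in>X. slt le y x}. cnt le X k y) = (\<Sum>j\<le>k. real (k choose j) * cnt (slt le) X (Suc j) x)" .
  have "cnt le X (Suc k) x = (\<Sum>j\<le>k. real (k choose j) * (cnt (slt le) X (Suc j) x + cnt (slt le) X j x))"
    using s1 s2 Suc.IH[OF Suc.prems] by (simp add: sum.distrib distrib_left)
  then show ?case using pascal1[of k "\<lambda>j. cnt (slt le) X j x"] by simp
qed

lemma wt_le:
  assumes fp: "fposet X le" and "x \<in> X"
  shows "wt le X g k x = (\<Sum>j\<le>k. real (Suc k choose Suc j) * wt (slt le) X g j x)"
  using assms(2)
proof (induction k arbitrary: x)
  case 0 then show ?case by simp
next
  case (Suc k)
  note sp = split_le[OF fp Suc.prems]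
  define b where "b = (\<lambda>j. wt (slt le) X g j x)"
  define c where "c = (\<lambda>j. g x * cnt (slt le) X j x)"
  have s1: "wt le X g (Suc k) x = wt le X g k x + (\<Sum>y\<in>{y\<in>X. slt le y x}. wt le X g k y) + g x * cnt le X (Suc k) x"
    by (simp add: wt.simps(2) sp(1) sum.insert[OF sp(3) sp(2)])
  have bc: "\<And>j. b (Suc j) - c (Suc j) = (\<Sum>y\<in>{y\<in>X. slt le y x}. wt (slt le) X g j y)"
    unfolding b_def c_def by (simp add: wt.simps(2))
  have "(\<Sum>y\<in>{y\<in>X. slt le y x}. wt le X g k y)
      = (\<Sum>y\<in>{y\<in>X. slt le y x}. \<Sum>j\<le>k. real (Suc k choose Suc j) * wt (slt le) X g j y)"
    using Suc.IH by (intro sum.cong) auto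
  also have "... = (\<Sum>j\<le>k. real (Suc k choose Suc j) * (\<Sum>y\<in>{y\<in>X. slt le y x}. wt (slt le) X g j y))"
    by (subst sum.swap) (simp add: sum_distrib_left)
  also have "... = (\<Sum>j\<le>k. real (Suc k choose Suc j) * (b (Suc j) - c (Suc j)))"
    by (simp add: bc)
  finally have s2: "(\<Sum>y\<in>{y\<in>X. slt le y x}. wt le X g k y) = (\<Sum>j\<le>k. real (Suc k choose Suc j) * (b (Suc j) - c (Suc j)))" .
  have s3: "g x * cnt le X (Suc k) x = (\<Sum>j\<le>Suc k. real (Suc k choose j) * c j)"
    unfolding c_def using cnt_le[OF fp Suc.prems, of "Suc k"] by (simp add: sum_distrib_left algebra_simps)
  have s4: "wt le X g k x = (\<Sum>j\<le>k. real (Suc k choose Suc j) * b j)"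
    unfolding b_def using Suc.IH[OF Suc.prems] .
  have s5: "(\<Sum>j\<le>k. real (Suc k choose Suc j) * (b (Suc j) - c (Suc j) + b j))
     = (\<Sum>j\<le>k. real (Suc k choose Suc j) * (b (Suc j) - c (Suc j))) + (\<Sum>j\<le>k. real (Suc k choose Suc j) * b j)"
    by (simp add: sum.distrib distrib_left)
  have b0: "b 0 = c 0" unfolding b_def c_def by simp
  have "wt le X g (Suc k) x = (\<Sum>j\<le>Suc k. real (Suc (Suc k) choose Suc j) * b j)"
    using s1 s2 s3 s4 s5 pascal2[of b c k, OF b0] by linarith
  then show ?case unfolding b_def .
qed

lemma wt_cong:
  assumes "\<forall>z\<in>X. g z = h z" "x \<in> X"
  shows "wt R X g k x = wt R X h k x"
  using assms(2)
proof (induction k arbitrary: x)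
  case 0 then show ?case using assms(1) by simp
next
  case (Suc k)
  have "(\<Sum>y\<in>{y\<in>X. R y x}. wt R X g k y) = (\<Sum>y\<in>{y\<in>X. R y x}. wt R X h k y)"
    using Suc.IH by (intro sum.cong) auto
  then show ?case using Suc.prems assms(1) by (simp add: wt.simps(2))
qed

lemma sum_times_prod: fixes f :: "'a \<Rightarrow> real" and g :: "'b \<Rightarrow> real" shows "(\<Sum>z\<in>A\<times>B. f (fst z) * g (snd z)) = (\<Sum>a\<in>A. f a) * (\<Sum>b\<in>B. g b)"
proof -
  have "sum f A * sum g B = (\<Sum>a\<in>A. \<Sum>b\<in>B. f a * g b)" by (rule sum_product)
  also have "... = (\<Sum>(a,b)\<in>A\<times>B. f a * g b)" by (rule sum.cartesian_product)
  also have "... = (\<Sum>z\<in>A\<times>B. f (fst z) * g (snd z))" by (simp add: case_prod_beta')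
  finally show ?thesis by simp
qed

lemma prod_le_set: "{z \<in> X \<times> Y. prod_le leX leY z (x,y)} = {a\<in>X. leX a x} \<times> {b\<in>Y. leY b y}"
  by (auto simp: prod_le_def)

lemma cnt_prod:
  assumes "x \<in> X" "y \<in> Y"
  shows "cnt (prod_le leX leY) (X \<times> Y) k (x,y) = cnt leX X k x * cnt leY Y k y"
  using assms
proof (induction k arbitrary: x y)
  case 0 then show ?case by simp
next
  case (Suc k)
  have "cnt (prod_le leX leY) (X \<times> Y) (Suc k) (x,y)
     = (\<Sum>z\<in>{a\<in>X. leX a x} \<times> {b\<in>Y. leY b y}. cnt (prod_le leX leY) (X \<times> Y) k z)"
    by (simp add: cnt.simps(2) prod_le_set)
  also have "... = (\<Sum>z\<in>{a\<in>X. leX a x} \<times> {b\<in>Y. leY b y}. cnt leX X k (fst z) * cnt leY Y k (snd z))"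
    using Suc.IH by (intro sum.cong) auto
  also have "... = (\<Sum>a\<in>{a\<in>X. leX a x}. cnt leX X k a) * (\<Sum>b\<in>{b\<in>Y. leY b y}. cnt leY Y k b)"
    by (rule sum_times_prod)
  finally show ?case by (simp add: cnt.simps(2))
qed

lemma wt_prod:
  assumes "x \<in> X" "y \<in> Y"
  shows "wt (prod_le leX leY) (X \<times> Y) (\<lambda>z. gX (fst z) + gY (snd z)) k (x,y)
     = wt leX X gX k x * cnt leY Y k y + cnt leX X k x * wt leY Y gY k y"
  using assms
proof (induction k arbitrary: x y)
  case 0 then show ?case by simp
next
  case (Suc k)
  define A where "A = {a\<in>X. leX a x}"
  define B where "B = {b\<in>Y. leY b y}"
  define WA where "WA = (\<Sum>a\<in>A. wt leX X gX k a)"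
  define WB where "WB = (\<Sum>b\<in>B. wt leY Y gY k b)"
  define CA where "CA = (\<Sum>a\<in>A. cnt leX X k a)"
  define CB where "CB = (\<Sum>b\<in>B. cnt leY Y k b)"
  have "(\<Sum>z\<in>A \<times> B. wt (prod_le leX leY) (X \<times> Y) (\<lambda>z. gX (fst z) + gY (snd z)) k z)
     = (\<Sum>z\<in>A \<times> B. wt leX X gX k (fst z) * cnt leY Y k (snd z) + cnt leX X k (fst z) * wt leY Y gY k (snd z))"
    using Suc.IH unfolding A_def B_def by (intro sum.cong) auto
  also have "... = WA * CB + CA * WB"
    unfolding WA_def CB_def CA_def WB_def sum.distrib sum_times_prod by simp
  finally have e1: "(\<Sum>z\<in>A \<times> B. wt (prod_le leX leY) (X \<times> Y) (\<lambda>z. gX (fst z) + gY (snd z)) k z) = WA * CB + CA * WB" .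
  have e2: "cnt (prod_le leX leY) (X \<times> Y) (Suc k) (x,y) = CA * CB"
    using cnt_prod[OF Suc.prems, of leX leY "Suc k"] unfolding CA_def CB_def A_def B_def
    by (simp add: cnt.simps(2))
  have "wt (prod_le leX leY) (X \<times> Y) (\<lambda>z. gX (fst z) + gY (snd z)) (Suc k) (x,y)
     = WA * CB + CA * WB + (gX x + gY y) * (CA * CB)"
    using e1 e2 unfolding A_def B_def by (simp add: wt.simps(2) prod_le_set)
  moreover have "wt leX X gX (Suc k) x = WA + gX x * CA"
    unfolding WA_def CA_def A_def by (simp add: wt.simps(2) cnt.simps(2))
  moreover have "wt leY Y gY (Suc k) y = WB + gY y * CB"
    unfolding WB_def CB_def B_def by (simp add: wt.simps(2) cnt.simps(2))
  moreover have "cnt leX X (Suc k) x = CA" unfolding CA_def A_def by (simp add: cnt.simps(2))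
  moreover have "cnt leY Y (Suc k) y = CB" unfolding CB_def B_def by (simp add: cnt.simps(2))
  ultimately show ?case by (simp add: algebra_simps)
qed

definition Stot where "Stot X le g k = (\<Sum>x\<in>X. wt le X g k x)"
definition Ttot where "Ttot X le g j = (\<Sum>x\<in>X. wt (slt le) X g j x)"
definition Atot where "Atot X le k = (\<Sum>x\<in>X. cnt le X k x)"
definition Ntot where "Ntot X le j = (\<Sum>x\<in>X. cnt (slt le) X j x)"

lemma Stot_eq: "fposet X le \<Longrightarrow> Stot X le g k = (\<Sum>j\<le>k. real (Suc k choose Suc j) * Ttot X le g j)"
  unfolding Stot_def Ttot_def
  by (simp add: wt_le sum_distrib_left) (rule sum.swap)

lemma Atot_eq: "fposet X le \<Longrightarrow> Atot X le k = (\<Sum>j\<le>k. real (k choose j) * Ntot X le j)"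
  unfolding Atot_def Ntot_def
  by (simp add: cnt_le sum_distrib_left) (rule sum.swap)

lemma Stot_prod:
  "Stot (X \<times> Y) (prod_le leX leY) (\<lambda>z. gX (fst z) + gY (snd z)) k
     = Stot X leX gX k * Atot Y leY k + Atot X leX k * Stot Y leY gY k"
proof -
  have "Stot (X \<times> Y) (prod_le leX leY) (\<lambda>z. gX (fst z) + gY (snd z)) k
     = (\<Sum>z\<in>X \<times> Y. wt leX X gX k (fst z) * cnt leY Y k (snd z) + cnt leX X k (fst z) * wt leY Y gY k (snd z))"
    unfolding Stot_def by (intro sum.cong) (auto simp: wt_prod)
  also have "... = Stot X leX gX k * Atot Y leY k + Atot X leX k * Stot Y leY gY k"
    unfolding Stot_def Atot_def sum.distrib sum_times_prod by simp
  finally show ?thesis .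
qed

lemma invert_tri:
  assumes "\<forall>k. (\<Sum>j\<le>k. real (Suc k choose Suc j) * t j) = 0"
  shows "t j = 0"
proof (induction j rule: less_induct)
  case (less j)
  have "(\<Sum>j'\<le>j. real (Suc j choose Suc j') * t j') = t j + (\<Sum>j'<j. real (Suc j choose Suc j') * t j')"
    by (simp add: lessThan_Suc_atMost[symmetric])
  also have "(\<Sum>j'<j. real (Suc j choose Suc j') * t j') = 0"
    using less by (intro sum.neutral) auto
  finally show ?case using assms by simp
qed



definition KL where "KL X le j x = {L \<in> kchains X le j. last L = x}"

lemma sorted_last: "sorted_wrt R L \<Longrightarrow> a \<in> set L \<Longrightarrow> a \<noteq> last L \<Longrightarrow> R a (last L)"
  by (induction L) (auto simp: last_in_set)

lemma KL_step:
  assumes fp: "fposet X le" and x: "x \<in> X"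
  shows "KL X le (Suc j) x = (\<lambda>L. L @ [x]) ` (\<Union>y\<in>{y\<in>X. slt le y x}. KL X le j y)"
proof
  show "KL X le (Suc j) x \<subseteq> (\<lambda>L. L @ [x]) ` (\<Union>y\<in>{y\<in>X. slt le y x}. KL X le j y)"
  proof
    fix L assume L: "L \<in> KL X le (Suc j) x"
    then have len: "length L = Suc (Suc j)" and sx: "set L \<subseteq> X" and so: "sorted_wrt (slt le) L"
      and la: "last L = x"
      unfolding KL_def kchains_def by auto
    have Lne: "L \<noteq> []" using len by auto
    define L' where "L' = butlast L"
    have Ld: "L = L' @ [x]" unfolding L'_def by (metis append_butlast_last_id Lne la)
    have len': "length L' = Suc j" using len unfolding L'_def by simp
    then have L'ne: "L' \<noteq> []" by auto
    have so': "sorted_wrt (slt le) L'" and lt: "\<forall>a\<in>set L'. slt le a x"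
      using so Ld by (auto simp: sorted_wrt_append)
    have sx': "set L' \<subseteq> X" using sx Ld by auto
    define y where "y = last L'"
    have yin: "y \<in> set L'" unfolding y_def using L'ne by simp
    have "L' \<in> KL X le j y" unfolding KL_def kchains_def y_def using len' sx' so' by auto
    moreover have "y \<in> {y\<in>X. slt le y x}" using yin sx' lt by auto
    ultimately show "L \<in> (\<lambda>L. L @ [x]) ` (\<Union>y\<in>{y\<in>X. slt le y x}. KL X le j y)"
      using Ld by blast
  qed
next
  show "(\<lambda>L. L @ [x]) ` (\<Union>y\<in>{y\<in>X. slt le y x}. KL X le j y) \<subseteq> KL X le (Suc j) x"
  proof
    fix L assume "L \<in> (\<lambda>L. L @ [x]) ` (\<Union>y\<in>{y\<in>X. slt le y x}. KL X le j y)"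
    then obtain y L' where y: "y \<in> X" "slt le y x" and L': "L' \<in> KL X le j y" and Ld: "L = L' @ [x]"
      by blast
    have len': "length L' = Suc j" and sx': "set L' \<subseteq> X" and so': "sorted_wrt (slt le) L'"
      and la: "last L' = y"
      using L' unfolding KL_def kchains_def by auto
    have lt: "\<forall>a\<in>set L'. slt le a x"
    proof
      fix a assume a: "a \<in> set L'"
      have aX: "a \<in> X" using a sx' by auto
      have ay: "le a y"
      proof (cases "a = y")
        case True then show ?thesis using fposetD(2)[OF fp aX] by simp
      next
        case False then show ?thesis using sorted_last[OF so' a] la by (auto simp: slt_def)
      qed
      have "le a x" using fposetD(4)[OF fp aX y(1) x] ay y(2) by (auto simp: slt_def)
      moreover have "a \<noteq> x"
      proof
        assume "a = x"
        then have "le x y" using ay by simp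
        then show False using fposetD(3)[OF fp x y(1)] y(2) by (auto simp: slt_def)
      qed
      ultimately show "slt le a x" by (simp add: slt_def)
    qed
    show "L \<in> KL X le (Suc j) x"
      unfolding KL_def kchains_def using Ld len' sx' so' lt x by (auto simp: sorted_wrt_append)
  qed
qed

lemma KL_zero: "x \<in> X \<Longrightarrow> KL X le 0 x = {[x]}"
proof
  assume x: "x \<in> X"
  show "KL X le 0 x \<subseteq> {[x]}"
  proof
    fix L assume "L \<in> KL X le 0 x"
    then have "length L = 1" "last L = x" unfolding KL_def kchains_def by auto
    then show "L \<in> {[x]}" by (cases L) auto
  qed
  show "{[x]} \<subseteq> KL X le 0 x" using x unfolding KL_def kchains_def by auto
qed

lemma KL_sub: "KL X le j x \<subseteq> kchains X le j" unfolding KL_def by blast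

lemma KL_counts:
  assumes fp: "fposet X le"
  shows "x \<in> X \<Longrightarrow> real (card (KL X le j x)) = cnt (slt le) X j x
     \<and> (\<Sum>L\<in>KL X le j x. sum_list (map g L)) = wt (slt le) X g j x"
proof (induction j arbitrary: x)
  case 0 then show ?case by (simp add: KL_zero)
next
  case (Suc j)
  define Y where "Y = {y\<in>X. slt le y x}"
  have finX: "finite X" using fposetD(1)[OF fp] .
  have finY: "finite Y" unfolding Y_def using finX by simp
  have finK: "\<forall>y\<in>Y. finite (KL X le j y)"
    using finite_subset[OF KL_sub finite_kchains[OF finX]] by blast
  have disj: "\<forall>y\<in>Y. \<forall>y'\<in>Y. y \<noteq> y' \<longrightarrow> KL X le j y \<inter> KL X le j y' = {}"
    unfolding KL_def by auto
  have YX: "\<And>y. y \<in> Y \<Longrightarrow> y \<in> X" unfolding Y_def by simp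
  have eq: "KL X le (Suc j) x = (\<lambda>L. L @ [x]) ` (\<Union>y\<in>Y. KL X le j y)"
    unfolding Y_def by (rule KL_step[OF fp Suc.prems])
  have inj: "inj_on (\<lambda>L. L @ [x]) (\<Union>y\<in>Y. KL X le j y)" by (rule inj_onI) simp
  have c1: "real (card (KL X le (Suc j) x)) = (\<Sum>y\<in>Y. real (card (KL X le j y)))"
    unfolding eq card_image[OF inj] card_UN_disjoint[OF finY finK disj] by simp
  also have "... = (\<Sum>y\<in>Y. cnt (slt le) X j y)" using Suc.IH YX by (intro sum.cong) auto
  also have "... = cnt (slt le) X (Suc j) x" unfolding Y_def by (simp add: cnt.simps(2))
  finally have C: "real (card (KL X le (Suc j) x)) = cnt (slt le) X (Suc j) x" .
  have "(\<Sum>L\<in>KL X le (Suc j) x. sum_list (map g L))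
      = (\<Sum>L\<in>(\<Union>y\<in>Y. KL X le j y). sum_list (map g (L @ [x])))"
    unfolding eq sum.reindex[OF inj] by simp
  also have "... = (\<Sum>y\<in>Y. \<Sum>L\<in>KL X le j y. sum_list (map g L) + g x)"
    by (subst sum.UNION_disjoint[OF finY finK disj]) simp
  also have "... = (\<Sum>y\<in>Y. wt (slt le) X g j y + g x * cnt (slt le) X j y)"
  proof (intro sum.cong refl)
    fix y assume y: "y \<in> Y"
    have "(\<Sum>L\<in>KL X le j y. sum_list (map g L) + g x)
        = (\<Sum>L\<in>KL X le j y. sum_list (map g L)) + g x * real (card (KL X le j y))"
      by (simp add: sum.distrib)
    then show "(\<Sum>L\<in>KL X le j y. sum_list (map g L) + g x) = wt (slt le) X g j y + g x * cnt (slt le) X j y"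
      using Suc.IH[OF YX[OF y]] by simp
  qed
  also have "... = wt (slt le) X g (Suc j) x"
    unfolding Y_def by (simp add: wt.simps(2) cnt.simps(2) sum.distrib sum_distrib_left)
  finally show ?case using C by simp
qed

definition Tl where "Tl X le j g = (\<Sum>L\<in>kchains X le j. sum_list (map g L))"

lemma kchains_KL: "fposet X le \<Longrightarrow> kchains X le j = (\<Union>x\<in>X. KL X le j x)"
proof
  assume fp: "fposet X le"
  show "kchains X le j \<subseteq> (\<Union>x\<in>X. KL X le j x)"
  proof
    fix L assume L: "L \<in> kchains X le j"
    then have "L \<noteq> []" "set L \<subseteq> X" unfolding kchains_def by auto
    then have "last L \<in> X" using last_in_set by blast
    then show "L \<in> (\<Union>x\<in>X. KL X le j x)" using L unfolding KL_def by blast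
  qed
  show "(\<Union>x\<in>X. KL X le j x) \<subseteq> kchains X le j" unfolding KL_def by blast
qed

lemma KL_union_facts:
  assumes fp: "fposet X le"
  shows "finite X" "\<forall>x\<in>X. finite (KL X le j x)"
    "\<forall>x\<in>X. \<forall>y\<in>X. x \<noteq> y \<longrightarrow> KL X le j x \<inter> KL X le j y = {}"
  using fposetD(1)[OF fp] finite_subset[OF KL_sub finite_kchains[OF fposetD(1)[OF fp]]]
  unfolding KL_def by auto

lemma Tl_Ttot: "fposet X le \<Longrightarrow> Tl X le j g = Ttot X le g j"
proof -
  assume fp: "fposet X le"
  note f = fposetD(1)[OF fp] KL_union_facts(2,3)[OF fp, of j]
  have "Tl X le j g = (\<Sum>x\<in>X. \<Sum>L\<in>KL X le j x. sum_list (map g L))"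
    unfolding Tl_def kchains_KL[OF fp] by (rule sum.UNION_disjoint[OF f])
  also have "... = Ttot X le g j" unfolding Ttot_def using KL_counts[OF fp] by (intro sum.cong) auto
  finally show ?thesis .
qed

lemma card_kchains: "fposet X le \<Longrightarrow> real (card (kchains X le j)) = Ntot X le j"
proof -
  assume fp: "fposet X le"
  note f = fposetD(1)[OF fp] KL_union_facts(2,3)[OF fp, of j]
  have "real (card (kchains X le j)) = (\<Sum>x\<in>X. real (card (KL X le j x)))"
    unfolding kchains_KL[OF fp] card_UN_disjoint[OF f] by simp
  also have "... = Ntot X le j" unfolding Ntot_def using KL_counts[OF fp] by (intro sum.cong) auto
  finally show ?thesis .
qed

lemma sum_count_swap:
  fixes f :: "'a \<Rightarrow> real"
  assumes fX: "finite X" and fF: "finite F" and sub: "\<forall>c\<in>F. A c \<subseteq> X"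
  shows "(\<Sum>x\<in>X. f x * real (card {c\<in>F. x \<in> A c})) = (\<Sum>c\<in>F. \<Sum>x\<in>A c. f x)"
proof -
  have "(\<Sum>x\<in>X. f x * real (card {c\<in>F. x \<in> A c})) = (\<Sum>x\<in>X. \<Sum>c\<in>F. if x \<in> A c then f x else 0)"
  proof (intro sum.cong refl)
    fix x
    have "(\<Sum>c\<in>F. if x \<in> A c then f x else 0) = (\<Sum>c\<in>{c\<in>F. x \<in> A c}. f x)"
      by (rule sum.inter_filter[OF fF, symmetric])
    also have "... = f x * real (card {c\<in>F. x \<in> A c})" by (simp add: mult.commute)
    finally have h: "(\<Sum>c\<in>F. if x \<in> A c then f x else 0) = f x * real (card {c\<in>F. x \<in> A c})" .
    show "f x * real (card {c\<in>F. x \<in> A c}) = (\<Sum>c\<in>F. if x \<in> A c then f x else 0)"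
      by (rule h[symmetric])
  qed
  also have "... = (\<Sum>c\<in>F. \<Sum>x\<in>X. if x \<in> A c then f x else 0)" by (rule sum.swap)
  also have "... = (\<Sum>c\<in>F. \<Sum>x\<in>A c. f x)"
  proof (rule sum.cong[OF refl])
    fix c assume c: "c \<in> F"
    have "(\<Sum>x\<in>X. if x \<in> A c then f x else 0) = (\<Sum>x\<in>{x\<in>X. x \<in> A c}. f x)"
      by (rule sum.inter_filter[OF fX, symmetric])
    also have "... = (\<Sum>x\<in>A c. f x)" using sub c by (intro sum.cong) auto
    finally show "(\<Sum>x\<in>X. if x \<in> A c then f x else 0) = (\<Sum>x\<in>A c. f x)" .
  qed
  finally show ?thesis .
qed

lemma E_chain_formula:
  assumes fp: "fposet X le"
  shows "E_chain_ddeg X le k = Tl X le k (\<lambda>x. real (ddeg X le x)) / (real (Suc k) * real (card (kchains X le k)))"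
proof -
  define D where "D = real (Suc k) * real (card (kchains X le k))"
  define d where "d = (\<lambda>x. real (ddeg X le x))"
  have fX: "finite X" using fposetD(1)[OF fp] .
  have "E_chain_ddeg X le k = (\<Sum>x\<in>X. d x * real (card {cs \<in> kchains X le k. x \<in> set cs})) / D"
    unfolding E_chain_ddeg_def D_def d_def by (simp add: sum_divide_distrib)
  also have "(\<Sum>x\<in>X. d x * real (card {cs \<in> kchains X le k. x \<in> set cs}))
      = (\<Sum>cs\<in>kchains X le k. \<Sum>x\<in>set cs. d x)"
    using sum_count_swap[OF fX finite_kchains[OF fX], where A=set and f=d] kchain_props(4)[OF fp] by blast
  also have "... = Tl X le k d"
    unfolding Tl_def using kchain_props(3)[OF fp]
    by (intro sum.cong refl) (simp add: sum_list_distinct_conv_sum_set)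
  finally show ?thesis unfolding D_def d_def .
qed

lemma sum_list_const: "sum_list (map (\<lambda>x. (1::real)) L) = real (length L)"
  by (induction L) auto

lemma E_maxchain_formula:
  assumes fp: "fposet X le" and mc: "maxchains X le = set ` kchains X le m"
  shows "E_maxchain_ddeg X le = E_chain_ddeg X le m"
proof -
  define d where "d = (\<lambda>x. real (ddeg X le x))"
  have fX: "finite X" using fposetD(1)[OF fp] .
  have fK: "finite (kchains X le m)" using finite_kchains[OF fX] .
  have fM: "finite (maxchains X le)" using mc fK by simp
  have subM: "\<forall>C\<in>maxchains X le. C \<subseteq> X" using mc kchain_props(4)[OF fp] by blast
  have inj: "inj_on set (kchains X le m)" using kchains_inj[OF fp] .
  have gen: "(\<Sum>x\<in>X. f x * real (card {C \<in> maxchains X le. x \<in> C})) = Tl X le m f" for f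
  proof -
    have "(\<Sum>x\<in>X. f x * real (card {C \<in> maxchains X le. x \<in> C})) = (\<Sum>C\<in>maxchains X le. \<Sum>x\<in>C. f x)"
      using sum_count_swap[OF fX fM subM, of f] by simp
    also have "... = (\<Sum>L\<in>kchains X le m. \<Sum>x\<in>set L. f x)"
      unfolding mc by (rule sum.reindex[OF inj, unfolded comp_def])
    also have "... = Tl X le m f"
      unfolding Tl_def using kchain_props(3)[OF fp]
      by (intro sum.cong refl) (simp add: sum_list_distinct_conv_sum_set)
    finally show ?thesis .
  qed
  have W: "(\<Sum>y\<in>X. real (card {C \<in> maxchains X le. y \<in> C})) = real (Suc m) * real (card (kchains X le m))"
  proof -
    have "(\<Sum>y\<in>X. real (card {C \<in> maxchains X le. y \<in> C})) = Tl X le m (\<lambda>x. 1)"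
      using gen[of "\<lambda>x. 1"] by simp
    also have "... = (\<Sum>L\<in>kchains X le m. real (Suc m))"
      unfolding Tl_def sum_list_const using kchain_props(6)[OF fp] by (intro sum.cong) auto
    finally show ?thesis by simp
  qed
  have "E_maxchain_ddeg X le = (\<Sum>x\<in>X. d x * real (card {C \<in> maxchains X le. x \<in> C}))
        / (\<Sum>y\<in>X. real (card {C \<in> maxchains X le. y \<in> C}))"
    unfolding E_maxchain_ddeg_def d_def by (simp add: sum_divide_distrib)
  also have "... = Tl X le m d / (real (Suc m) * real (card (kchains X le m)))"
    using gen W by simp
  finally show ?thesis using E_chain_formula[OF fp] unfolding d_def by simp
qed

lemma Tl_shift:
  assumes fp: "fposet X le"
  shows "Tl X le k (\<lambda>x. f x - e) = Tl X le k f - e * (real (Suc k) * real (card (kchains X le k)))"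
proof -
  have l: "sum_list (map (\<lambda>x. f x - e) L) = sum_list (map f L) - e * real (length L)" for L
    by (induction L) (auto simp: algebra_simps)
  have "Tl X le k (\<lambda>x. f x - e) = (\<Sum>L\<in>kchains X le k. sum_list (map f L) - e * real (Suc k))"
    unfolding Tl_def l using kchain_props(6)[OF fp] by (intro sum.cong) auto
  also have "... = Tl X le k f - e * (real (Suc k) * real (card (kchains X le k)))"
    unfolding Tl_def by (simp add: sum_subtractf algebra_simps)
  finally show ?thesis .
qed

lemma chain_E_iff:
  assumes fp: "fposet X le" and ne: "kchains X le k \<noteq> {}"
  shows "E_chain_ddeg X le k = e \<longleftrightarrow> Tl X le k (\<lambda>x. real (ddeg X le x) - e) = 0"
proof -
  define D where "D = real (Suc k) * real (card (kchains X le k))"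
  have "card (kchains X le k) \<noteq> 0" using ne finite_kchains[OF fposetD(1)[OF fp]] by simp
  then have Dp: "D > 0" unfolding D_def by simp
  show ?thesis
    unfolding E_chain_formula[OF fp] Tl_shift[OF fp] D_def[symmetric]
    using Dp by (auto simp: field_simps)
qed

lemma Tl_empty: "kchains X le k = {} \<Longrightarrow> Tl X le k f = 0"
  unfolding Tl_def by simp

lemma covers_prod:
  assumes X: "fposet X leX" and Y: "fposet Y leY" and x: "x \<in> X" and y: "y \<in> Y"
  shows "{z \<in> X \<times> Y. covers (X \<times> Y) (prod_le leX leY) z (x,y)}
     = ({a\<in>X. covers X leX a x} \<times> {y}) \<union> ({x} \<times> {b\<in>Y. covers Y leY b y})"
proof
  show "{z \<in> X \<times> Y. covers (X \<times> Y) (prod_le leX leY) z (x,y)}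
     \<subseteq> ({a\<in>X. covers X leX a x} \<times> {y}) \<union> ({x} \<times> {b\<in>Y. covers Y leY b y})"
  proof
    fix z assume "z \<in> {z \<in> X \<times> Y. covers (X \<times> Y) (prod_le leX leY) z (x,y)}"
    then obtain a b where z: "z = (a,b)" and a: "a \<in> X" and b: "b \<in> Y"
      and cv: "covers (X \<times> Y) (prod_le leX leY) (a,b) (x,y)" by auto
    have ax: "leX a x" and byy: "leY b y" and ne: "a \<noteq> x \<or> b \<noteq> y"
      and nob: "\<not> (\<exists>w\<in>X \<times> Y. slt (prod_le leX leY) (a,b) w \<and> slt (prod_le leX leY) w (x,y))"
      using cv unfolding covers_def slt_def prod_le_def by auto
    have "a = x \<or> b = y"
    proof (rule ccontr)
      assume h: "\<not> (a = x \<or> b = y)"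
      have "slt (prod_le leX leY) (a,b) (a,y)" using h byy fposetD(2)[OF X a]
        unfolding slt_def prod_le_def by auto
      moreover have "slt (prod_le leX leY) (a,y) (x,y)" using h ax fposetD(2)[OF Y y]
        unfolding slt_def prod_le_def by auto
      ultimately show False using nob a y by blast
    qed
    then show "z \<in> ({a\<in>X. covers X leX a x} \<times> {y}) \<union> ({x} \<times> {b\<in>Y. covers Y leY b y})"
    proof
      assume bx: "b = y"
      then have anx: "a \<noteq> x" using ne by blast
      have "covers X leX a x" unfolding covers_def
      proof (intro conjI)
        show "a \<in> X" "x \<in> X" using a x by auto
        show "slt leX a x" using ax anx by (simp add: slt_def)
        show "\<not> (\<exists>c\<in>X. slt leX a c \<and> slt leX c x)"
        proof
          assume "\<exists>c\<in>X. slt leX a c \<and> slt leX c x"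
          then obtain c where c: "c \<in> X" "slt leX a c" "slt leX c x" by blast
          have "slt (prod_le leX leY) (a,b) (c,y)" using c bx fposetD(2)[OF Y y]
            unfolding slt_def prod_le_def by auto
          moreover have "slt (prod_le leX leY) (c,y) (x,y)" using c fposetD(2)[OF Y y]
            unfolding slt_def prod_le_def by auto
          ultimately show False using nob c(1) y by blast
        qed
      qed
      then show ?thesis using z bx a by blast
    next
      assume ax': "a = x"
      then have bny: "b \<noteq> y" using ne by blast
      have "covers Y leY b y" unfolding covers_def
      proof (intro conjI)
        show "b \<in> Y" "y \<in> Y" using b y by auto
        show "slt leY b y" using byy bny by (simp add: slt_def)
        show "\<not> (\<exists>c\<in>Y. slt leY b c \<and> slt leY c y)"
        proof
          assume "\<exists>c\<in>Y. slt leY b c \<and> slt leY c y"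
          then obtain c where c: "c \<in> Y" "slt leY b c" "slt leY c y" by blast
          have "slt (prod_le leX leY) (a,b) (x,c)" using c ax' fposetD(2)[OF X x]
            unfolding slt_def prod_le_def by auto
          moreover have "slt (prod_le leX leY) (x,c) (x,y)" using c fposetD(2)[OF X x]
            unfolding slt_def prod_le_def by auto
          ultimately show False using nob c(1) x by blast
        qed
      qed
      then show ?thesis using z ax' b by blast
    qed
  qed
next
  show "({a\<in>X. covers X leX a x} \<times> {y}) \<union> ({x} \<times> {b\<in>Y. covers Y leY b y})
     \<subseteq> {z \<in> X \<times> Y. covers (X \<times> Y) (prod_le leX leY) z (x,y)}"
  proof
    fix z assume "z \<in> ({a\<in>X. covers X leX a x} \<times> {y}) \<union> ({x} \<times> {b\<in>Y. covers Y leY b y})"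
    then show "z \<in> {z \<in> X \<times> Y. covers (X \<times> Y) (prod_le leX leY) z (x,y)}"
    proof
      assume "z \<in> {a\<in>X. covers X leX a x} \<times> {y}"
      then obtain a where z: "z = (a,y)" and a: "a \<in> X" and cv: "covers X leX a x" by blast
      have sl: "slt leX a x" and nob: "\<not> (\<exists>c\<in>X. slt leX a c \<and> slt leX c x)"
        using cv unfolding covers_def by auto
      have "covers (X \<times> Y) (prod_le leX leY) (a,y) (x,y)" unfolding covers_def
      proof (intro conjI)
        show "(a,y) \<in> X \<times> Y" "(x,y) \<in> X \<times> Y" using a x y by auto
        show "slt (prod_le leX leY) (a, y) (x, y)" using sl fposetD(2)[OF Y y]
          unfolding slt_def prod_le_def by auto
        show "\<not> (\<exists>w\<in>X \<times> Y. slt (prod_le leX leY) (a, y) w \<and> slt (prod_le leX leY) w (x, y))"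
        proof
          assume "\<exists>w\<in>X \<times> Y. slt (prod_le leX leY) (a, y) w \<and> slt (prod_le leX leY) w (x, y)"
          then obtain c d where cd: "c \<in> X" "d \<in> Y" "slt (prod_le leX leY) (a, y) (c,d)"
            "slt (prod_le leX leY) (c,d) (x, y)" by auto
          have "leY y d" "leY d y" using cd unfolding slt_def prod_le_def by auto
          then have "d = y" using fposetD(3)[OF Y cd(2) y] by simp
          then have "slt leX a c" "slt leX c x" using cd unfolding slt_def prod_le_def by auto
          then show False using nob cd(1) by blast
        qed
      qed
      then show ?thesis using z a y by auto
    next
      assume "z \<in> {x} \<times> {b\<in>Y. covers Y leY b y}"
      then obtain b where z: "z = (x,b)" and b: "b \<in> Y" and cv: "covers Y leY b y" by blast
      have sl: "slt leY b y" and nob: "\<not> (\<exists>c\<in>Y. slt leY b c \<and> slt leY c y)"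
        using cv unfolding covers_def by auto
      have "covers (X \<times> Y) (prod_le leX leY) (x,b) (x,y)" unfolding covers_def
      proof (intro conjI)
        show "(x,b) \<in> X \<times> Y" "(x,y) \<in> X \<times> Y" using b x y by auto
        show "slt (prod_le leX leY) (x, b) (x, y)" using sl fposetD(2)[OF X x]
          unfolding slt_def prod_le_def by auto
        show "\<not> (\<exists>w\<in>X \<times> Y. slt (prod_le leX leY) (x, b) w \<and> slt (prod_le leX leY) w (x, y))"
        proof
          assume "\<exists>w\<in>X \<times> Y. slt (prod_le leX leY) (x, b) w \<and> slt (prod_le leX leY) w (x, y)"
          then obtain c d where cd: "c \<in> X" "d \<in> Y" "slt (prod_le leX leY) (x, b) (c,d)"
            "slt (prod_le leX leY) (c,d) (x, y)" by auto
          have "leX x c" "leX c x" using cd unfolding slt_def prod_le_def by auto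
          then have "c = x" using fposetD(3)[OF X cd(1) x] by simp
          then have "slt leY b d" "slt leY d y" using cd unfolding slt_def prod_le_def by auto
          then show False using nob cd(2) by blast
        qed
      qed
      then show ?thesis using z b x by auto
    qed
  qed
qed

lemma ddeg_prod:
  assumes X: "fposet X leX" and Y: "fposet Y leY" and x: "x \<in> X" and y: "y \<in> Y"
  shows "ddeg (X \<times> Y) (prod_le leX leY) (x,y) = ddeg X leX x + ddeg Y leY y"
proof -
  have fX: "finite {a\<in>X. covers X leX a x}" using fposetD(1)[OF X] by simp
  have fY: "finite {b\<in>Y. covers Y leY b y}" using fposetD(1)[OF Y] by simp
  have dj: "({a\<in>X. covers X leX a x} \<times> {y}) \<inter> ({x} \<times> {b\<in>Y. covers Y leY b y}) = {}"
    unfolding covers_def slt_def by auto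
  show ?thesis unfolding ddeg_def covers_prod[OF assms]
    by (subst card_Un_disjoint) (use fX fY dj in \<open>auto simp: card_cartesian_product\<close>)
qed

lemma E_uni_prod:
  assumes X: "fposet X leX" "X \<noteq> {}" and Y: "fposet Y leY" "Y \<noteq> {}"
  shows "E_uni_ddeg (X \<times> Y) (prod_le leX leY) = E_uni_ddeg X leX + E_uni_ddeg Y leY"
proof -
  have fX: "finite X" and fY: "finite Y" using fposetD(1) X Y by auto
  have cX: "card X > 0" and cY: "card Y > 0" using fX fY X(2) Y(2) by (auto simp: card_gt_0_iff)
  have "(\<Sum>z\<in>X \<times> Y. real (ddeg (X \<times> Y) (prod_le leX leY) z))
      = (\<Sum>z\<in>X \<times> Y. real (ddeg X leX (fst z)) * 1 + 1 * real (ddeg Y leY (snd z)))"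
    using ddeg_prod[OF X(1) Y(1)] by (intro sum.cong) auto
  also have "... = (\<Sum>x\<in>X. real (ddeg X leX x)) * real (card Y) + real (card X) * (\<Sum>y\<in>Y. real (ddeg Y leY y))"
  proof -
    have a: "(\<Sum>z\<in>X \<times> Y. real (ddeg X leX (fst z)) * (\<lambda>_. 1) (snd z)) = (\<Sum>x\<in>X. real (ddeg X leX x)) * (\<Sum>y\<in>Y. (1::real))"
      by (rule sum_times_prod)
    have b: "(\<Sum>z\<in>X \<times> Y. (\<lambda>_. 1) (fst z) * real (ddeg Y leY (snd z))) = (\<Sum>x\<in>X. (1::real)) * (\<Sum>y\<in>Y. real (ddeg Y leY y))"
      by (rule sum_times_prod)
    show ?thesis using a b by (simp add: sum.distrib)
  qed
  finally have S: "(\<Sum>z\<in>X \<times> Y. real (ddeg (X \<times> Y) (prod_le leX leY) z))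
     = (\<Sum>x\<in>X. real (ddeg X leX x)) * real (card Y) + real (card X) * (\<Sum>y\<in>Y. real (ddeg Y leY y))" .
  show ?thesis unfolding E_uni_ddeg_def S card_cartesian_product
    using cX cY by (simp add: field_simps)
qed



lemma choose_le_pow:
  assumes "j \<le> n" "1 \<le> K" "k \<le> K"
  shows "real (k choose j) \<le> real K ^ n"
proof (cases "j \<le> k")
  case True
  have "k choose j \<le> k ^ j" using binomial_le_pow[OF True] .
  also have "k ^ j \<le> K ^ j" using assms(3) by (simp add: power_mono)
  also have "K ^ j \<le> K ^ n" using assms(1,2) by (simp add: power_increasing)
  finally have "k choose j \<le> K ^ n" .
  then show ?thesis by (metis of_nat_le_iff of_nat_power)
next
  case False then show ?thesis by (simp add: binomial_eq_0)
qed

lemma bound_gen: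
  fixes t :: "nat \<Rightarrow> real" and c :: "nat \<Rightarrow> real"
  assumes z: "\<forall>j. j \<notin> J \<longrightarrow> t j = 0" and fin: "finite J" and cb: "\<forall>j\<in>J. 0 \<le> c j \<and> c j \<le> B"
  shows "\<bar>\<Sum>j\<le>k. c j * t j\<bar> \<le> B * (\<Sum>j\<in>J. \<bar>t j\<bar>)"
proof -
  have "(\<Sum>j\<le>k. c j * t j) = (\<Sum>j\<in>{..k} \<inter> J. c j * t j)"
    using z by (intro sum.mono_neutral_right) auto
  also have "\<bar>...\<bar> \<le> (\<Sum>j\<in>{..k} \<inter> J. \<bar>c j * t j\<bar>)" by (rule sum_abs)
  also have "... \<le> (\<Sum>j\<in>J. \<bar>c j * t j\<bar>)" using fin by (intro sum_mono2) auto
  also have "... \<le> (\<Sum>j\<in>J. B * \<bar>t j\<bar>)"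
    using cb by (intro sum_mono) (auto simp: abs_mult intro: mult_right_mono)
  also have "... = B * (\<Sum>j\<in>J. \<bar>t j\<bar>)" by (simp add: sum_distrib_left)
  finally show ?thesis .
qed

lemma bound_S:
  fixes t :: "nat \<Rightarrow> real"
  assumes "\<forall>j\<ge>m. t j = 0"
  shows "\<bar>\<Sum>j\<le>k. real (Suc k choose Suc j) * t j\<bar> \<le> (\<Sum>j<m. \<bar>t j\<bar>) * real (Suc k) ^ m"
proof -
  have "\<bar>\<Sum>j\<le>k. real (Suc k choose Suc j) * t j\<bar> \<le> real (Suc k) ^ m * (\<Sum>j\<in>{..<m}. \<bar>t j\<bar>)"
  proof (rule bound_gen)
    show "\<forall>j. j \<notin> {..<m} \<longrightarrow> t j = 0" using assms by auto
    show "\<forall>j\<in>{..<m}. 0 \<le> real (Suc k choose Suc j) \<and> real (Suc k choose Suc j) \<le> real (Suc k) ^ m"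
    proof
      fix j assume "j \<in> {..<m}"
      then have j: "Suc j \<le> m" by simp
      have "real (Suc k choose Suc j) \<le> real (Suc k) ^ m" by (rule choose_le_pow[OF j]) auto
      then show "0 \<le> real (Suc k choose Suc j) \<and> real (Suc k choose Suc j) \<le> real (Suc k) ^ m"
        by (intro conjI of_nat_0_le_iff)
    qed
  qed simp
  then show ?thesis by (simp add: mult.commute)
qed

lemma bound_A:
  fixes t :: "nat \<Rightarrow> real"
  assumes "\<forall>j>n. t j = 0"
  shows "\<bar>\<Sum>j\<le>k. real (k choose j) * t j\<bar> \<le> (\<Sum>j\<le>n. \<bar>t j\<bar>) * real (Suc k) ^ n"
proof -
  have "\<bar>\<Sum>j\<le>k. real (k choose j) * t j\<bar> \<le> real (Suc k) ^ n * (\<Sum>j\<in>{..n}. \<bar>t j\<bar>)"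
  proof (rule bound_gen)
    show "\<forall>j. j \<notin> {..n} \<longrightarrow> t j = 0" using assms by auto
    show "\<forall>j\<in>{..n}. 0 \<le> real (k choose j) \<and> real (k choose j) \<le> real (Suc k) ^ n"
    proof
      fix j assume "j \<in> {..n}"
      then have j: "j \<le> n" by simp
      have "real (k choose j) \<le> real (Suc k) ^ n" by (rule choose_le_pow[OF j]) auto
      then show "0 \<le> real (k choose j) \<and> real (k choose j) \<le> real (Suc k) ^ n"
        by (intro conjI of_nat_0_le_iff)
    qed
  qed simp
  then show ?thesis by (simp add: mult.commute)
qed

lemma top_zero:
  fixes t :: "nat \<Rightarrow> real"
  assumes z: "\<forall>j>M. t j = 0" and b: "\<forall>k. \<bar>\<Sum>j\<le>k. real (Suc k choose Suc j) * t j\<bar> \<le> c * real (Suc k) ^ M"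
  shows "t M = 0"
proof (rule ccontr)
  assume ne: "t M \<noteq> 0"
  define t' where "t' = t(M := 0)"
  define s where "s = (\<Sum>j<M. \<bar>t' j\<bar>)"
  define D where "D = real (Suc M) ^ Suc M * (c + s)"
  have key: "real (Suc k) * \<bar>t M\<bar> \<le> D" if kM: "M \<le> k" for k
  proof -
    define K where "K = real (Suc k)"
    have Kp: "K > 0" unfolding K_def by simp
    have split0: "(\<Sum>j\<le>k. real (Suc k choose Suc j) * t j)
        = (\<Sum>j\<le>k. real (Suc k choose Suc j) * t' j + (if j = M then real (Suc k choose Suc M) * t M else 0))"
      by (intro sum.cong refl) (simp add: t'_def)
    have split: "(\<Sum>j\<le>k. real (Suc k choose Suc j) * t j)
        = (\<Sum>j\<le>k. real (Suc k choose Suc j) * t' j) + real (Suc k choose Suc M) * t M"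
      unfolding split0 sum.distrib using kM by simp
    have z': "\<forall>j\<ge>M. t' j = 0" using z unfolding t'_def by auto
    have bR: "\<bar>\<Sum>j\<le>k. real (Suc k choose Suc j) * t' j\<bar> \<le> s * K ^ M"
      using bound_S[OF z', of k] unfolding s_def K_def .
    have bT: "\<bar>\<Sum>j\<le>k. real (Suc k choose Suc j) * t j\<bar> \<le> c * K ^ M" using b unfolding K_def by blast
    have "real (Suc k choose Suc M) * \<bar>t M\<bar> = \<bar>real (Suc k choose Suc M) * t M\<bar>" by (simp add: abs_mult)
    also have "... \<le> \<bar>\<Sum>j\<le>k. real (Suc k choose Suc j) * t j\<bar> + \<bar>\<Sum>j\<le>k. real (Suc k choose Suc j) * t' j\<bar>"
      using split by linarith
    also have "... \<le> (c + s) * K ^ M" using bR bT by (simp add: algebra_simps)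
    finally have up: "real (Suc k choose Suc M) * \<bar>t M\<bar> \<le> (c + s) * K ^ M" .
    have low: "(K / real (Suc M)) ^ Suc M \<le> real (Suc k choose Suc M)"
      unfolding K_def using binomial_ge_n_over_k_pow_k[of "Suc M" "Suc k"] kM by simp
    have "(K / real (Suc M)) ^ Suc M * \<bar>t M\<bar> \<le> (c + s) * K ^ M"
      using mult_right_mono[OF low abs_ge_zero[of "t M"]] up by linarith
    then have "K ^ Suc M * \<bar>t M\<bar> / real (Suc M) ^ Suc M \<le> (c + s) * K ^ M"
      by (simp add: power_divide)
    then have "K ^ Suc M * \<bar>t M\<bar> \<le> (c + s) * K ^ M * real (Suc M) ^ Suc M"
      by (simp add: divide_le_eq)
    then have "K ^ M * (K * \<bar>t M\<bar>) \<le> K ^ M * D"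
      unfolding D_def by (simp add: algebra_simps)
    then have "K * \<bar>t M\<bar> \<le> D" using Kp by (simp add: mult_le_cancel_left_pos)
    then show ?thesis unfolding K_def .
  qed
  have tp: "\<bar>t M\<bar> > 0" using ne by simp
  obtain n where n: "D / \<bar>t M\<bar> < real n" using reals_Archimedean2 by blast
  define k where "k = max n M"
  have "real n \<le> real (Suc k)" unfolding k_def by simp
  then have "D / \<bar>t M\<bar> < real (Suc k)" using n by linarith
  then have "D < real (Suc k) * \<bar>t M\<bar>" using tp by (simp add: divide_less_eq)
  moreover have "real (Suc k) * \<bar>t M\<bar> \<le> D" using key[of k] unfolding k_def by simp
  ultimately show False by simp
qed

definition gfun where "gfun X le = (\<lambda>x. real (ddeg X le x) - E_uni_ddeg X le)"

lemma g_prod: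
  assumes X: "fposet X leX" "X \<noteq> {}" and Y: "fposet Y leY" "Y \<noteq> {}" and z: "z \<in> X \<times> Y"
  shows "gfun (X \<times> Y) (prod_le leX leY) z = gfun X leX (fst z) + gfun Y leY (snd z)"
proof -
  obtain x y where "z = (x,y)" "x \<in> X" "y \<in> Y" using z by auto
  then show ?thesis unfolding gfun_def using ddeg_prod[OF X(1) Y(1)] E_uni_prod[OF X Y] by simp
qed

lemma Ttot_prod_cong:
  assumes X: "fposet X leX" "X \<noteq> {}" and Y: "fposet Y leY" "Y \<noteq> {}"
  shows "Ttot (X \<times> Y) (prod_le leX leY) (gfun (X \<times> Y) (prod_le leX leY)) j
       = Ttot (X \<times> Y) (prod_le leX leY) (\<lambda>z. gfun X leX (fst z) + gfun Y leY (snd z)) j"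
  unfolding Ttot_def
  by (intro sum.cong refl wt_cong) (use g_prod[OF X Y] in auto)

lemma chain_E_iff_T:
  assumes fp: "fposet X le" and ne: "kchains X le k \<noteq> {}"
  shows "E_chain_ddeg X le k = E_uni_ddeg X le \<longleftrightarrow> Ttot X le (gfun X le) k = 0"
  using chain_E_iff[OF fp ne] Tl_Ttot[OF fp] unfolding gfun_def by simp

lemma T_zero_above:
  assumes fp: "fposet X le" and "chain_length X le < k"
  shows "Ttot X le g k = 0"
  using Tl_Ttot[OF fp, of k g] Tl_empty[OF kchains_empty_above[OF assms], of g] by simp

lemma mCDE_T:
  assumes fp: "fposet X le" and ne: "X \<noteq> {}" and m: "mCDE X le"
  shows "Ttot X le (gfun X le) j = 0"
proof (cases "j \<le> chain_length X le")
  case True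
  then have "kchains X le j \<noteq> {}" using kchains_nonempty fp ne by blast
  moreover have "E_chain_ddeg X le j = E_uni_ddeg X le" using m True unfolding mCDE_def by blast
  ultimately show ?thesis using chain_E_iff_T[OF fp] by blast
next
  case False then show ?thesis using T_zero_above[OF fp] by simp
qed

lemma mCDE_prod:
  assumes X: "fposet X leX" "X \<noteq> {}" and Y: "fposet Y leY" "Y \<noteq> {}"
    and mX: "mCDE X leX" and mY: "mCDE Y leY"
  shows "mCDE (X \<times> Y) (prod_le leX leY)"
proof -
  define gX where "gX = gfun X leX"
  define gY where "gY = gfun Y leY"
  have fpP: "fposet (X \<times> Y) (prod_le leX leY)" using fposet_prod X(1) Y(1) by blast
  have neP: "X \<times> Y \<noteq> {}" using X Y by auto
  have SX: "Stot X leX gX k = 0" for k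
    unfolding Stot_eq[OF X(1)] gX_def using mCDE_T[OF X mX] by simp
  have SY: "Stot Y leY gY k = 0" for k
    unfolding Stot_eq[OF Y(1)] gY_def using mCDE_T[OF Y mY] by simp
  have "\<forall>k. (\<Sum>j\<le>k. real (Suc k choose Suc j) * Ttot (X \<times> Y) (prod_le leX leY) (\<lambda>z. gX (fst z) + gY (snd z)) j) = 0"
    using Stot_prod[where X=X and Y=Y and leX=leX and leY=leY and gX=gX and gY=gY] SX SY Stot_eq[OF fpP] by simp
  then have T0: "Ttot (X \<times> Y) (prod_le leX leY) (\<lambda>z. gX (fst z) + gY (snd z)) j = 0" for j
    by (rule invert_tri)
  show ?thesis unfolding mCDE_def
  proof (intro allI impI)
    fix k assume k: "k \<le> chain_length (X \<times> Y) (prod_le leX leY)"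
    have "kchains (X \<times> Y) (prod_le leX leY) k \<noteq> {}" using kchains_nonempty[OF fpP neP k] .
    moreover have "Ttot (X \<times> Y) (prod_le leX leY) (gfun (X \<times> Y) (prod_le leX leY)) k = 0"
      using Ttot_prod_cong[OF X Y] T0 unfolding gX_def gY_def by simp
    ultimately show "E_chain_ddeg (X \<times> Y) (prod_le leX leY) k = E_uni_ddeg (X \<times> Y) (prod_le leX leY)"
      using chain_E_iff_T[OF fpP] by blast
  qed
qed

lemma CDE_T:
  assumes fp: "fposet X le" and g: "graded X le r m" and c: "CDE X le"
  shows "\<forall>j\<ge>m. Ttot X le (gfun X le) j = 0"
proof (intro allI impI)
  fix j assume j: "m \<le> j"
  note gm = graded_maxchains[OF fp g]
  show "Ttot X le (gfun X le) j = 0"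
  proof (cases "j = m")
    case True
    have "E_chain_ddeg X le m = E_uni_ddeg X le"
      using c E_maxchain_formula[OF fp gm(1)] unfolding CDE_def by simp
    then show ?thesis using chain_E_iff_T[OF fp gm(3)] True by simp
  next
    case False
    then have "chain_length X le < j" using gm(2) j by simp
    then show ?thesis using T_zero_above[OF fp] by simp
  qed
qed

lemma CDE_prod:
  assumes X: "fposet X leX" "X \<noteq> {}" and Y: "fposet Y leY" "Y \<noteq> {}"
    and grX: "graded X leX rX m" and grY: "graded Y leY rY n"
    and cX: "CDE X leX" and cY: "CDE Y leY"
  shows "CDE (X \<times> Y) (prod_le leX leY)"
proof -
  define gX where "gX = gfun X leX"
  define gY where "gY = gfun Y leY"
  define P where "P = prod_le leX leY"
  define G where "G = (\<lambda>z. gX (fst z) + gY (snd z))"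
  define M where "M = m + n"
  have fpP: "fposet (X \<times> Y) P" unfolding P_def using fposet_prod X(1) Y(1) by blast
  have grP: "graded (X \<times> Y) P (\<lambda>z. rX (fst z) + rY (snd z)) M"
    unfolding P_def M_def using graded_prod[OF X(1) Y(1) grX grY] .
  note gmP = graded_maxchains[OF fpP grP]
  note gmX = graded_maxchains[OF X(1) grX]
  note gmY = graded_maxchains[OF Y(1) grY]
  have TX: "\<forall>j\<ge>m. Ttot X leX gX j = 0" using CDE_T[OF X(1) grX cX] unfolding gX_def .
  have TY: "\<forall>j\<ge>n. Ttot Y leY gY j = 0" using CDE_T[OF Y(1) grY cY] unfolding gY_def .
  have NX: "\<forall>j>m. Ntot X leX j = 0"
    using card_kchains[OF X(1)] kchains_empty_above[OF X(1)] gmX(2) by (metis card.empty of_nat_0)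
  have NY: "\<forall>j>n. Ntot Y leY j = 0"
    using card_kchains[OF Y(1)] kchains_empty_above[OF Y(1)] gmY(2) by (metis card.empty of_nat_0)
  have TP: "\<forall>j>M. Ttot (X \<times> Y) P G j = 0"
    using T_zero_above[OF fpP] gmP(2) by simp
  define sX where "sX = (\<Sum>j<m. \<bar>Ttot X leX gX j\<bar>)"
  define sY where "sY = (\<Sum>j<n. \<bar>Ttot Y leY gY j\<bar>)"
  define aX where "aX = (\<Sum>j\<le>m. \<bar>Ntot X leX j\<bar>)"
  define aY where "aY = (\<Sum>j\<le>n. \<bar>Ntot Y leY j\<bar>)"
  have bnd: "\<bar>\<Sum>j\<le>k. real (Suc k choose Suc j) * Ttot (X \<times> Y) P G j\<bar> \<le> (sX * aY + aX * sY) * real (Suc k) ^ M" for k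
  proof -
    define K where "K = real (Suc k)"
    have bSX: "\<bar>Stot X leX gX k\<bar> \<le> sX * K ^ m"
      unfolding Stot_eq[OF X(1)] sX_def K_def by (rule bound_S[OF TX])
    have bSY: "\<bar>Stot Y leY gY k\<bar> \<le> sY * K ^ n"
      unfolding Stot_eq[OF Y(1)] sY_def K_def by (rule bound_S[OF TY])
    have bAX: "\<bar>Atot X leX k\<bar> \<le> aX * K ^ m"
      unfolding Atot_eq[OF X(1)] aX_def K_def by (rule bound_A[OF NX])
    have bAY: "\<bar>Atot Y leY k\<bar> \<le> aY * K ^ n"
      unfolding Atot_eq[OF Y(1)] aY_def K_def by (rule bound_A[OF NY])
    have e: "(\<Sum>j\<le>k. real (Suc k choose Suc j) * Ttot (X \<times> Y) P G j)
        = Stot X leX gX k * Atot Y leY k + Atot X leX k * Stot Y leY gY k"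
      using Stot_prod[where X=X and Y=Y and leX=leX and leY=leY and gX=gX and gY=gY and k=k] Stot_eq[OF fpP] unfolding P_def G_def by simp
    have p1: "\<bar>Stot X leX gX k * Atot Y leY k\<bar> \<le> (sX * K ^ m) * (aY * K ^ n)"
      unfolding abs_mult by (rule mult_mono[OF bSX bAY]) (use bSX in auto)
    have p2: "\<bar>Atot X leX k * Stot Y leY gY k\<bar> \<le> (aX * K ^ m) * (sY * K ^ n)"
      unfolding abs_mult by (rule mult_mono[OF bAX bSY]) (use bAX in auto)
    have "\<bar>Stot X leX gX k * Atot Y leY k + Atot X leX k * Stot Y leY gY k\<bar>
        \<le> (sX * K ^ m) * (aY * K ^ n) + (aX * K ^ m) * (sY * K ^ n)"
      using p1 p2 abs_triangle_ineq[of "Stot X leX gX k * Atot Y leY k" "Atot X leX k * Stot Y leY gY k"]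
      by linarith
    also have "... = (sX * aY + aX * sY) * K ^ M" unfolding M_def by (simp add: power_add algebra_simps)
    finally show ?thesis unfolding e K_def .
  qed
  have "Ttot (X \<times> Y) P G M = 0" by (rule top_zero[OF TP]) (use bnd in blast)
  then have "Ttot (X \<times> Y) P (gfun (X \<times> Y) P) M = 0"
    using Ttot_prod_cong[OF X Y] unfolding P_def G_def gX_def gY_def by simp
  then have "E_chain_ddeg (X \<times> Y) P M = E_uni_ddeg (X \<times> Y) P"
    using chain_E_iff_T[OF fpP gmP(3)] by simp
  then show ?thesis unfolding CDE_def P_def using E_maxchain_formula[OF fpP gmP(1)] P_def by simp
qed



lemma ddeg_iso:
  assumes bij: "bij_betw f A B" and ord: "\<forall>x\<in>A. \<forall>y\<in>A. le' (f x) (f y) \<longleftrightarrow> le x y" and x: "x \<in> A"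
  shows "ddeg B le' (f x) = ddeg A le x"
proof -
  have inj: "inj_on f A" and fA: "B = f ` A" using bij unfolding bij_betw_def by auto
  have slt_eq: "slt le' (f a) (f b) \<longleftrightarrow> slt le a b" if ab: "a \<in> A" "b \<in> A" for a b
  proof -
    have "f a = f b \<longleftrightarrow> a = b" using inj ab unfolding inj_on_def by blast
    moreover have "le' (f a) (f b) \<longleftrightarrow> le a b" using ord ab by blast
    ultimately show ?thesis unfolding slt_def by blast
  qed
  have cov: "covers B le' (f a) (f x) \<longleftrightarrow> covers A le a x" if a: "a \<in> A" for a
  proof
    assume c: "covers B le' (f a) (f x)"
    show "covers A le a x" unfolding covers_def
    proof (intro conjI)
      show "a \<in> A" "x \<in> A" using a x by auto
      show "slt le a x" using c slt_eq[OF a x] unfolding covers_def by blast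
      show "\<not> (\<exists>z\<in>A. slt le a z \<and> slt le z x)"
      proof
        assume "\<exists>z\<in>A. slt le a z \<and> slt le z x"
        then obtain z where z: "z \<in> A" "slt le a z" "slt le z x" by blast
        have "f z \<in> B" using fA z(1) by blast
        moreover have "slt le' (f a) (f z)" using slt_eq[OF a z(1)] z(2) by blast
        moreover have "slt le' (f z) (f x)" using slt_eq[OF z(1) x] z(3) by blast
        ultimately show False using c unfolding covers_def by blast
      qed
    qed
  next
    assume c: "covers A le a x"
    show "covers B le' (f a) (f x)" unfolding covers_def
    proof (intro conjI)
      show "f a \<in> B" "f x \<in> B" using fA a x by auto
      show "slt le' (f a) (f x)" using c slt_eq[OF a x] unfolding covers_def by blast
      show "\<not> (\<exists>z\<in>B. slt le' (f a) z \<and> slt le' z (f x))"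
      proof
        assume "\<exists>z\<in>B. slt le' (f a) z \<and> slt le' z (f x)"
        then obtain w where w: "w \<in> B" "slt le' (f a) w" "slt le' w (f x)" by blast
        obtain z where z: "z \<in> A" "w = f z" using w(1) fA by blast
        have "slt le a z" using slt_eq[OF a z(1)] w(2) z(2) by blast
        moreover have "slt le z x" using slt_eq[OF z(1) x] w(3) z(2) by blast
        ultimately show False using c z(1) unfolding covers_def by blast
      qed
    qed
  qed
  have eq: "{b\<in>B. covers B le' b (f x)} = f ` {a\<in>A. covers A le a x}"
  proof
    show "{b\<in>B. covers B le' b (f x)} \<subseteq> f ` {a\<in>A. covers A le a x}"
    proof
      fix b assume b: "b \<in> {b\<in>B. covers B le' b (f x)}"
      then obtain a where a: "a \<in> A" "b = f a" using fA by blast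
      then have "covers A le a x" using b cov[OF a(1)] by blast
      then show "b \<in> f ` {a\<in>A. covers A le a x}" using a by blast
    qed
    show "f ` {a\<in>A. covers A le a x} \<subseteq> {b\<in>B. covers B le' b (f x)}"
    proof
      fix b assume "b \<in> f ` {a\<in>A. covers A le a x}"
      then obtain a where a: "a \<in> A" "covers A le a x" "b = f a" by blast
      then have "covers B le' b (f x)" using cov[OF a(1)] by blast
      moreover have "b \<in> B" using a fA by blast
      ultimately show "b \<in> {b\<in>B. covers B le' b (f x)}" by blast
    qed
  qed
  have "inj_on f {a\<in>A. covers A le a x}" by (rule inj_on_subset[OF inj]) auto
  then show ?thesis unfolding ddeg_def eq by (simp add: card_image)
qed

lemma E_uni_iso:
  assumes bij: "bij_betw f A B" and ord: "\<forall>x\<in>A. \<forall>y\<in>A. le' (f x) (f y) \<longleftrightarrow> le x y"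
  shows "E_uni_ddeg B le' = E_uni_ddeg A le"
proof -
  have "(\<Sum>y\<in>B. real (ddeg B le' y)) = (\<Sum>x\<in>A. real (ddeg B le' (f x)))"
    by (rule sum.reindex_bij_betw[OF bij, symmetric])
  also have "... = (\<Sum>x\<in>A. real (ddeg A le x))" using ddeg_iso[OF bij ord] by simp
  finally show ?thesis unfolding E_uni_ddeg_def using bij_betw_same_card[OF bij] by simp
qed

definition psi :: "'a set \<Rightarrow> 'b set \<Rightarrow> ('a + 'b) set" where "psi I K = Inl ` I \<union> Inr ` K"

lemma psi_vimage: "Inl -` psi I K = I" "Inr -` psi I K = K"
  unfolding psi_def by auto

lemma psi_ideal:
  assumes I: "I \<in> ideals P leP" and K: "K \<in> ideals Q leQ"
  shows "psi I K \<in> ideals (P <+> Q) (sum_le leP leQ)"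
  unfolding ideals_def
proof (intro CollectI conjI ballI impI)
  show "psi I K \<subseteq> P <+> Q" using I K unfolding ideals_def psi_def by auto
  fix x y assume x: "x \<in> psi I K" and y: "y \<in> P <+> Q" and yx: "sum_le leP leQ y x"
  show "y \<in> psi I K"
  proof (cases x)
    case (Inl a)
    then have a: "a \<in> I" using x unfolding psi_def by auto
    obtain b where yb: "y = Inl b" using yx Inl by (cases y) auto
    then have "b \<in> P" "leP b a" using y yx Inl by auto
    then have "b \<in> I" using I a unfolding ideals_def by blast
    then show ?thesis unfolding psi_def yb by blast
  next
    case (Inr a)
    then have a: "a \<in> K" using x unfolding psi_def by auto
    obtain b where yb: "y = Inr b" using yx Inr by (cases y) auto
    then have "b \<in> Q" "leQ b a" using y yx Inr by auto
    then have "b \<in> K" using K a unfolding ideals_def by blast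
    then show ?thesis unfolding psi_def yb by blast
  qed
qed

lemma vimage_ideal:
  assumes J: "J \<in> ideals (P <+> Q) (sum_le leP leQ)"
  shows "Inl -` J \<in> ideals P leP" "Inr -` J \<in> ideals Q leQ" "psi (Inl -` J) (Inr -` J) = J"
proof -
  have JP: "J \<subseteq> P <+> Q" and cl: "\<forall>x\<in>J. \<forall>y\<in>P <+> Q. sum_le leP leQ y x \<longrightarrow> y \<in> J"
    using J unfolding ideals_def by auto
  show "Inl -` J \<in> ideals P leP" unfolding ideals_def
  proof (intro CollectI conjI ballI impI)
    show "Inl -` J \<subseteq> P" using JP by auto
    fix a b assume "a \<in> Inl -` J" "b \<in> P" "leP b a"
    then have "Inl b \<in> P <+> Q" "sum_le leP leQ (Inl b) (Inl a)" "Inl a \<in> J" by auto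
    then have "Inl b \<in> J" using cl by blast
    then show "b \<in> Inl -` J" by simp
  qed
  show "Inr -` J \<in> ideals Q leQ" unfolding ideals_def
  proof (intro CollectI conjI ballI impI)
    show "Inr -` J \<subseteq> Q" using JP by auto
    fix a b assume "a \<in> Inr -` J" "b \<in> Q" "leQ b a"
    then have "Inr b \<in> P <+> Q" "sum_le leP leQ (Inr b) (Inr a)" "Inr a \<in> J" by auto
    then have "Inr b \<in> J" using cl by blast
    then show "b \<in> Inr -` J" by simp
  qed
  show "psi (Inl -` J) (Inr -` J) = J"
  proof
    show "psi (Inl -` J) (Inr -` J) \<subseteq> J" unfolding psi_def by auto
    show "J \<subseteq> psi (Inl -` J) (Inr -` J)"
    proof
      fix x assume "x \<in> J"
      then show "x \<in> psi (Inl -` J) (Inr -` J)" unfolding psi_def by (cases x) auto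
    qed
  qed
qed

lemma psi_bij:
  "bij_betw (\<lambda>z. psi (fst z) (snd z)) (ideals P leP \<times> ideals Q leQ) (ideals (P <+> Q) (sum_le leP leQ))"
  unfolding bij_betw_def
proof
  show "inj_on (\<lambda>z. psi (fst z) (snd z)) (ideals P leP \<times> ideals Q leQ)"
  proof (rule inj_onI)
    fix z w assume "psi (fst z) (snd z) = psi (fst w) (snd w)"
    then have "Inl -` psi (fst z) (snd z) = Inl -` psi (fst w) (snd w)"
      "Inr -` psi (fst z) (snd z) = Inr -` psi (fst w) (snd w)" by auto
    then show "z = w" unfolding psi_vimage by (simp add: prod_eq_iff)
  qed
  show "(\<lambda>z. psi (fst z) (snd z)) ` (ideals P leP \<times> ideals Q leQ) = ideals (P <+> Q) (sum_le leP leQ)"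
  proof
    show "(\<lambda>z. psi (fst z) (snd z)) ` (ideals P leP \<times> ideals Q leQ) \<subseteq> ideals (P <+> Q) (sum_le leP leQ)"
      using psi_ideal by auto
    show "ideals (P <+> Q) (sum_le leP leQ) \<subseteq> (\<lambda>z. psi (fst z) (snd z)) ` (ideals P leP \<times> ideals Q leQ)"
    proof
      fix J assume J: "J \<in> ideals (P <+> Q) (sum_le leP leQ)"
      note v = vimage_ideal[OF J]
      show "J \<in> (\<lambda>z. psi (fst z) (snd z)) ` (ideals P leP \<times> ideals Q leQ)"
        using v by (intro image_eqI[of _ _ "(Inl -` J, Inr -` J)"]) auto
    qed
  qed
qed

lemma psi_ord: "J_le (psi I K) (psi I' K') \<longleftrightarrow> prod_le J_le J_le (I, K) (I', K')"
proof
  assume "J_le (psi I K) (psi I' K')"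
  then have "Inl -` psi I K \<subseteq> Inl -` psi I' K'" "Inr -` psi I K \<subseteq> Inr -` psi I' K'" by auto
  then show "prod_le J_le J_le (I, K) (I', K')" unfolding psi_vimage prod_le_def by simp
next
  assume "prod_le J_le J_le (I, K) (I', K')"
  then show "J_le (psi I K) (psi I' K')" unfolding prod_le_def psi_def by auto
qed

lemma Tplus_Inl:
  assumes "I \<subseteq> P"
  shows "Tplus (P <+> Q) (sum_le leP leQ) (Inl p) (psi I K) = Tplus P leP p I"
proof -
  have e1: "Inl p \<in> P <+> Q \<longleftrightarrow> p \<in> P" by auto
  have e2: "Inl p \<notin> psi I K \<longleftrightarrow> p \<notin> I" unfolding psi_def by auto
  have e3: "(\<forall>q\<in>(P <+> Q) - psi I K. sum_le leP leQ q (Inl p) \<longrightarrow> q = Inl p)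
         \<longleftrightarrow> (\<forall>q\<in>P - I. leP q p \<longrightarrow> q = p)"
  proof
    assume h: "\<forall>q\<in>(P <+> Q) - psi I K. sum_le leP leQ q (Inl p) \<longrightarrow> q = Inl p"
    show "\<forall>q\<in>P - I. leP q p \<longrightarrow> q = p"
    proof (intro ballI impI)
      fix q assume q: "q \<in> P - I" "leP q p"
      have "Inl q \<in> (P <+> Q) - psi I K" using q unfolding psi_def by auto
      then show "q = p" using bspec[OF h \<open>Inl q \<in> (P <+> Q) - psi I K\<close>] q by simp
    qed
  next
    assume h: "\<forall>q\<in>P - I. leP q p \<longrightarrow> q = p"
    show "\<forall>q\<in>(P <+> Q) - psi I K. sum_le leP leQ q (Inl p) \<longrightarrow> q = Inl p"
    proof (intro ballI impI)
      fix q assume q: "q \<in> (P <+> Q) - psi I K" "sum_le leP leQ q (Inl p)"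
      then obtain a where qa: "q = Inl a" by (cases q) auto
      then have "a \<in> P - I" "leP a p" using q unfolding psi_def by auto
      then show "q = Inl p" using h qa by auto
    qed
  qed
  show ?thesis unfolding Tplus_def using e1 e2 e3 by simp
qed

lemma Tplus_Inr:
  assumes "K \<subseteq> Q"
  shows "Tplus (P <+> Q) (sum_le leP leQ) (Inr p) (psi I K) = Tplus Q leQ p K"
proof -
  have e1: "Inr p \<in> P <+> Q \<longleftrightarrow> p \<in> Q" by auto
  have e2: "Inr p \<notin> psi I K \<longleftrightarrow> p \<notin> K" unfolding psi_def by auto
  have e3: "(\<forall>q\<in>(P <+> Q) - psi I K. sum_le leP leQ q (Inr p) \<longrightarrow> q = Inr p)
         \<longleftrightarrow> (\<forall>q\<in>Q - K. leQ q p \<longrightarrow> q = p)"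
  proof
    assume h: "\<forall>q\<in>(P <+> Q) - psi I K. sum_le leP leQ q (Inr p) \<longrightarrow> q = Inr p"
    show "\<forall>q\<in>Q - K. leQ q p \<longrightarrow> q = p"
    proof (intro ballI impI)
      fix q assume q: "q \<in> Q - K" "leQ q p"
      have "Inr q \<in> (P <+> Q) - psi I K" using q unfolding psi_def by auto
      then show "q = p" using bspec[OF h \<open>Inr q \<in> (P <+> Q) - psi I K\<close>] q by simp
    qed
  next
    assume h: "\<forall>q\<in>Q - K. leQ q p \<longrightarrow> q = p"
    show "\<forall>q\<in>(P <+> Q) - psi I K. sum_le leP leQ q (Inr p) \<longrightarrow> q = Inr p"
    proof (intro ballI impI)
      fix q assume q: "q \<in> (P <+> Q) - psi I K" "sum_le leP leQ q (Inr p)"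
      then obtain a where qa: "q = Inr a" by (cases q) auto
      then have "a \<in> Q - K" "leQ a p" using q unfolding psi_def by auto
      then show "q = Inr p" using h qa by auto
    qed
  qed
  show ?thesis unfolding Tplus_def using e1 e2 e3 by simp
qed

lemma Tminus_Inl: "Tminus (P <+> Q) (sum_le leP leQ) (Inl p) (psi I K) = Tminus P leP p I"
proof -
  have e2: "Inl p \<in> psi I K \<longleftrightarrow> p \<in> I" unfolding psi_def by auto
  have e3: "(\<forall>q\<in>psi I K. sum_le leP leQ (Inl p) q \<longrightarrow> q = Inl p) \<longleftrightarrow> (\<forall>q\<in>I. leP p q \<longrightarrow> q = p)"
  proof
    assume h: "\<forall>q\<in>psi I K. sum_le leP leQ (Inl p) q \<longrightarrow> q = Inl p"
    show "\<forall>q\<in>I. leP p q \<longrightarrow> q = p"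
    proof (intro ballI impI)
      fix q assume q: "q \<in> I" "leP p q"
      have "Inl q \<in> psi I K" using q unfolding psi_def by auto
      then show "q = p" using h q by auto
    qed
  next
    assume h: "\<forall>q\<in>I. leP p q \<longrightarrow> q = p"
    show "\<forall>q\<in>psi I K. sum_le leP leQ (Inl p) q \<longrightarrow> q = Inl p"
    proof (intro ballI impI)
      fix q assume q: "q \<in> psi I K" "sum_le leP leQ (Inl p) q"
      then obtain a where qa: "q = Inl a" by (cases q) auto
      then have "a \<in> I" "leP p a" using q unfolding psi_def by auto
      then show "q = Inl p" using h qa by auto
    qed
  qed
  show ?thesis unfolding Tminus_def using e2 e3 by simp
qed

lemma Tminus_Inr: "Tminus (P <+> Q) (sum_le leP leQ) (Inr p) (psi I K) = Tminus Q leQ p K"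
proof -
  have e2: "Inr p \<in> psi I K \<longleftrightarrow> p \<in> K" unfolding psi_def by auto
  have e3: "(\<forall>q\<in>psi I K. sum_le leP leQ (Inr p) q \<longrightarrow> q = Inr p) \<longleftrightarrow> (\<forall>q\<in>K. leQ p q \<longrightarrow> q = p)"
  proof
    assume h: "\<forall>q\<in>psi I K. sum_le leP leQ (Inr p) q \<longrightarrow> q = Inr p"
    show "\<forall>q\<in>K. leQ p q \<longrightarrow> q = p"
    proof (intro ballI impI)
      fix q assume q: "q \<in> K" "leQ p q"
      have "Inr q \<in> psi I K" using q unfolding psi_def by auto
      then show "q = p" using h q by auto
    qed
  next
    assume h: "\<forall>q\<in>K. leQ p q \<longrightarrow> q = p"
    show "\<forall>q\<in>psi I K. sum_le leP leQ (Inr p) q \<longrightarrow> q = Inr p"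
    proof (intro ballI impI)
      fix q assume q: "q \<in> psi I K" "sum_le leP leQ (Inr p) q"
      then obtain a where qa: "q = Inr a" by (cases q) auto
      then have "a \<in> K" "leQ p a" using q unfolding psi_def by auto
      then show "q = Inr p" using h qa by auto
    qed
  qed
  show ?thesis unfolding Tminus_def using e2 e3 by simp
qed

lemma tCDE_sum:
  assumes fP: "fposet P leP" and fQ: "fposet Q leQ" and tP: "tCDE P leP" and tQ: "tCDE Q leQ"
  shows "tCDE (P <+> Q) (sum_le leP leQ)"
  unfolding tCDE_def
proof (intro allI impI)
  define A where "A = ideals P leP"
  define B where "B = ideals Q leQ"
  define Z where "Z = ideals (P <+> Q) (sum_le leP leQ)"
  define F where "F = (\<lambda>z::'a set \<times> 'b set. psi (fst z) (snd z))"
  fix \<mu> assume mu: "is_distr (ideals (P <+> Q) (sum_le leP leQ)) \<mu> \<and> toggle_symmetric (P <+> Q) (sum_le leP leQ) \<mu>"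
  have bij: "bij_betw F (A \<times> B) Z" unfolding F_def A_def B_def Z_def by (rule psi_bij)
  have fA: "fposet A J_le" unfolding A_def using fposet_ideals fposetD(1)[OF fP] by blast
  have fB: "fposet B J_le" unfolding B_def using fposet_ideals fposetD(1)[OF fQ] by blast
  have neA: "A \<noteq> {}" unfolding A_def using ideals_bot_top(1) by blast
  have neB: "B \<noteq> {}" unfolding B_def using ideals_bot_top(1) by blast
  have finA: "finite A" and finB: "finite B" using fposetD(1) fA fB by auto
  have reidx: "(\<Sum>J\<in>Z. h J) = (\<Sum>I\<in>A. \<Sum>K\<in>B. h (psi I K))" for h :: "('a + 'b) set \<Rightarrow> real"
  proof -
    have "(\<Sum>J\<in>Z. h J) = (\<Sum>z\<in>A \<times> B. h (F z))" by (rule sum.reindex_bij_betw[OF bij, symmetric])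
    also have "... = (\<Sum>(I,K)\<in>A \<times> B. h (psi I K))" unfolding F_def by (simp add: case_prod_beta')
    also have "... = (\<Sum>I\<in>A. \<Sum>K\<in>B. h (psi I K))" by (rule sum.cartesian_product[symmetric])
    finally show ?thesis .
  qed
  have psiZ: "\<And>I K. I \<in> A \<Longrightarrow> K \<in> B \<Longrightarrow> psi I K \<in> Z"
    unfolding A_def B_def Z_def using psi_ideal by blast
  have mu1: "\<forall>J\<in>Z. 0 \<le> \<mu> J" "(\<Sum>J\<in>Z. \<mu> J) = 1" using mu unfolding is_distr_def Z_def by auto
  have musym: "\<forall>p\<in>P <+> Q. Expect Z \<mu> (Tplus (P <+> Q) (sum_le leP leQ) p) = Expect Z \<mu> (Tminus (P <+> Q) (sum_le leP leQ) p)"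
    using mu unfolding toggle_symmetric_def Z_def by blast
  define \<mu>P where "\<mu>P = (\<lambda>I. \<Sum>K\<in>B. \<mu> (psi I K))"
  define \<mu>Q where "\<mu>Q = (\<lambda>K. \<Sum>I\<in>A. \<mu> (psi I K))"
  have dP: "is_distr A \<mu>P" unfolding is_distr_def
  proof
    show "\<forall>x\<in>A. 0 \<le> \<mu>P x" unfolding \<mu>P_def using mu1 psiZ by (auto intro: sum_nonneg)
    show "sum \<mu>P A = 1" unfolding \<mu>P_def using reidx[of \<mu>] mu1 by simp
  qed
  have dQ: "is_distr B \<mu>Q" unfolding is_distr_def
  proof
    show "\<forall>x\<in>B. 0 \<le> \<mu>Q x" unfolding \<mu>Q_def using mu1 psiZ by (auto intro: sum_nonneg)
    have "(\<Sum>K\<in>B. \<Sum>I\<in>A. \<mu> (psi I K)) = (\<Sum>I\<in>A. \<Sum>K\<in>B. \<mu> (psi I K))" by (rule sum.swap)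
    then show "sum \<mu>Q B = 1" unfolding \<mu>Q_def using reidx[of \<mu>] mu1 by simp
  qed
  have sP: "toggle_symmetric P leP \<mu>P" unfolding toggle_symmetric_def A_def[symmetric]
  proof
    fix p assume p: "p \<in> P"
    have "Expect A \<mu>P (Tplus P leP p) = Expect Z \<mu> (Tplus (P <+> Q) (sum_le leP leQ) (Inl p))"
    proof -
      have "Expect Z \<mu> (Tplus (P <+> Q) (sum_le leP leQ) (Inl p))
          = (\<Sum>I\<in>A. \<Sum>K\<in>B. Tplus P leP p I * \<mu> (psi I K))"
        unfolding Expect_def reidx
      proof (intro sum.cong refl)
        fix I K assume I: "I \<in> A" and K2: "K \<in> B"
        have "I \<subseteq> P" using I unfolding A_def ideals_def by blast
          then show "Tplus (P <+> Q) (sum_le leP leQ) (Inl p) (psi I K) * \<mu> (psi I K) = Tplus P leP p I * \<mu> (psi I K)"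
            by (simp only: Tplus_Inl)
      qed
      then show ?thesis unfolding Expect_def \<mu>P_def by (simp add: sum_distrib_left)
    qed
    moreover have "Expect A \<mu>P (Tminus P leP p) = Expect Z \<mu> (Tminus (P <+> Q) (sum_le leP leQ) (Inl p))"
    proof -
      have "Expect Z \<mu> (Tminus (P <+> Q) (sum_le leP leQ) (Inl p))
          = (\<Sum>I\<in>A. \<Sum>K\<in>B. Tminus P leP p I * \<mu> (psi I K))"
        unfolding Expect_def reidx
      proof (intro sum.cong refl)
        fix I K assume I: "I \<in> A" and K2: "K \<in> B"
        show "Tminus (P <+> Q) (sum_le leP leQ) (Inl p) (psi I K) * \<mu> (psi I K) = Tminus P leP p I * \<mu> (psi I K)"
            by (simp only: Tminus_Inl)
      qed
      then show ?thesis unfolding Expect_def \<mu>P_def by (simp add: sum_distrib_left)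
    qed
    moreover have "Inl p \<in> P <+> Q" using p by auto
    ultimately show "Expect A \<mu>P (Tplus P leP p) = Expect A \<mu>P (Tminus P leP p)" using musym by simp
  qed
  have sQ: "toggle_symmetric Q leQ \<mu>Q" unfolding toggle_symmetric_def B_def[symmetric]
  proof
    fix p assume p: "p \<in> Q"
    have "Expect B \<mu>Q (Tplus Q leQ p) = Expect Z \<mu> (Tplus (P <+> Q) (sum_le leP leQ) (Inr p))"
    proof -
      have "Expect Z \<mu> (Tplus (P <+> Q) (sum_le leP leQ) (Inr p))
          = (\<Sum>I\<in>A. \<Sum>K\<in>B. Tplus Q leQ p K * \<mu> (psi I K))"
        unfolding Expect_def reidx
      proof (intro sum.cong refl)
        fix I K assume I: "I \<in> A" and K2: "K \<in> B"
        have "K \<subseteq> Q" using K2 unfolding B_def ideals_def by blast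
          then show "Tplus (P <+> Q) (sum_le leP leQ) (Inr p) (psi I K) * \<mu> (psi I K) = Tplus Q leQ p K * \<mu> (psi I K)"
            by (simp only: Tplus_Inr)
      qed
      also have "... = (\<Sum>K\<in>B. \<Sum>I\<in>A. Tplus Q leQ p K * \<mu> (psi I K))" by (rule sum.swap)
      finally show ?thesis unfolding Expect_def \<mu>Q_def by (simp add: sum_distrib_left)
    qed
    moreover have "Expect B \<mu>Q (Tminus Q leQ p) = Expect Z \<mu> (Tminus (P <+> Q) (sum_le leP leQ) (Inr p))"
    proof -
      have "Expect Z \<mu> (Tminus (P <+> Q) (sum_le leP leQ) (Inr p))
          = (\<Sum>I\<in>A. \<Sum>K\<in>B. Tminus Q leQ p K * \<mu> (psi I K))"
        unfolding Expect_def reidx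
      proof (intro sum.cong refl)
        fix I K assume I: "I \<in> A" and K2: "K \<in> B"
        show "Tminus (P <+> Q) (sum_le leP leQ) (Inr p) (psi I K) * \<mu> (psi I K) = Tminus Q leQ p K * \<mu> (psi I K)"
            by (simp only: Tminus_Inr)
      qed
      also have "... = (\<Sum>K\<in>B. \<Sum>I\<in>A. Tminus Q leQ p K * \<mu> (psi I K))" by (rule sum.swap)
      finally show ?thesis unfolding Expect_def \<mu>Q_def by (simp add: sum_distrib_left)
    qed
    moreover have "Inr p \<in> P <+> Q" using p by auto
    ultimately show "Expect B \<mu>Q (Tplus Q leQ p) = Expect B \<mu>Q (Tminus Q leQ p)" using musym by simp
  qed
  have EP: "Expect A \<mu>P (\<lambda>I. real (ddeg A J_le I)) = E_uni_ddeg A J_le"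
    using tP dP sP unfolding tCDE_def A_def by blast
  have EQ: "Expect B \<mu>Q (\<lambda>I. real (ddeg B J_le I)) = E_uni_ddeg B J_le"
    using tQ dQ sQ unfolding tCDE_def B_def by blast
  have ord: "\<forall>x\<in>A \<times> B. \<forall>y\<in>A \<times> B. J_le (F x) (F y) \<longleftrightarrow> prod_le J_le J_le x y"
  proof (intro ballI)
    fix x y :: "'a set \<times> 'b set"
    show "J_le (F x) (F y) \<longleftrightarrow> prod_le J_le J_le x y"
      unfolding F_def using psi_ord[of "fst x" "snd x" "fst y" "snd y"] by simp
  qed
  have dd: "ddeg Z J_le (psi I K) = ddeg A J_le I + ddeg B J_le K" if "I \<in> A" "K \<in> B" for I K
  proof -
    have "ddeg Z J_le (F (I,K)) = ddeg (A \<times> B) (prod_le J_le J_le) (I,K)"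
      by (rule ddeg_iso[OF bij ord]) (use that in auto)
    then show ?thesis using ddeg_prod[OF fA fB that] unfolding F_def by simp
  qed
  have "Expect Z \<mu> (\<lambda>J. real (ddeg Z J_le J))
      = (\<Sum>I\<in>A. \<Sum>K\<in>B. (real (ddeg A J_le I) + real (ddeg B J_le K)) * \<mu> (psi I K))"
    unfolding Expect_def reidx using dd by (intro sum.cong refl) auto
  also have "... = (\<Sum>I\<in>A. \<Sum>K\<in>B. real (ddeg A J_le I) * \<mu> (psi I K))
                 + (\<Sum>I\<in>A. \<Sum>K\<in>B. real (ddeg B J_le K) * \<mu> (psi I K))"
    by (simp add: distrib_right sum.distrib)
  also have "(\<Sum>I\<in>A. \<Sum>K\<in>B. real (ddeg A J_le I) * \<mu> (psi I K)) = Expect A \<mu>P (\<lambda>I. real (ddeg A J_le I))"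
    unfolding Expect_def \<mu>P_def by (simp add: sum_distrib_left)
  also have "(\<Sum>I\<in>A. \<Sum>K\<in>B. real (ddeg B J_le K) * \<mu> (psi I K)) = Expect B \<mu>Q (\<lambda>I. real (ddeg B J_le I))"
    unfolding Expect_def \<mu>Q_def by (subst sum.swap) (simp add: sum_distrib_left)
  finally have "Expect Z \<mu> (\<lambda>J. real (ddeg Z J_le J)) = E_uni_ddeg A J_le + E_uni_ddeg B J_le"
    using EP EQ by simp
  moreover have "E_uni_ddeg Z J_le = E_uni_ddeg A J_le + E_uni_ddeg B J_le"
    using E_uni_iso[OF bij ord] E_uni_prod[OF fA neA fB neB] by simp
  ultimately show "Expect (ideals (P <+> Q) (sum_le leP leQ)) \<mu> (\<lambda>I. real (ddeg (ideals (P <+> Q) (sum_le leP leQ)) J_le I))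
         = E_uni_ddeg (ideals (P <+> Q) (sum_le leP leQ)) J_le"
    unfolding Z_def by simp
qed

theorem proposition3p6:
  fixes P :: "'a set" and leP :: "'a \<Rightarrow> 'a \<Rightarrow> bool"
    and Q :: "'b set" and leQ :: "'b \<Rightarrow> 'b \<Rightarrow> bool"
  assumes "fposet P leP" and "fposet Q leQ"
  shows "(CDE (ideals P leP) J_le \<and> CDE (ideals Q leQ) J_le
            \<longrightarrow> CDE (ideals P leP \<times> ideals Q leQ) (prod_le J_le J_le))
       \<and> (mCDE (ideals P leP) J_le \<and> mCDE (ideals Q leQ) J_le
            \<longrightarrow> mCDE (ideals P leP \<times> ideals Q leQ) (prod_le J_le J_le))
       \<and> (tCDE P leP \<and> tCDE Q leQ \<longrightarrow> tCDE (P <+> Q) (sum_le leP leQ))"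
proof -
  have fA: "fposet (ideals P leP) J_le" using fposet_ideals fposetD(1)[OF assms(1)] by blast
  have fB: "fposet (ideals Q leQ) J_le" using fposet_ideals fposetD(1)[OF assms(2)] by blast
  have neA: "ideals P leP \<noteq> {}" using ideals_bot_top(1) by blast
  have neB: "ideals Q leQ \<noteq> {}" using ideals_bot_top(1) by blast
  have c1: "CDE (ideals P leP) J_le \<and> CDE (ideals Q leQ) J_le
            \<longrightarrow> CDE (ideals P leP \<times> ideals Q leQ) (prod_le J_le J_le)"
    using CDE_prod[OF fA neA fB neB graded_ideals[OF assms(1)] graded_ideals[OF assms(2)]] by blast
  have c2: "mCDE (ideals P leP) J_le \<and> mCDE (ideals Q leQ) J_le
            \<longrightarrow> mCDE (ideals P leP \<times> ideals Q leQ) (prod_le J_le J_le)"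
    using mCDE_prod[OF fA neA fB neB] by blast
  have c3: "tCDE P leP \<and> tCDE Q leQ \<longrightarrow> tCDE (P <+> Q) (sum_le leP leQ)"
    using tCDE_sum[OF assms] by blast
  show ?thesis using c1 c2 c3 by (intro conjI)
qed

end
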